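(* Let $r\ge 3$, $k\ge 2r+13$, $m=\lfloor (k-1)/2\rfloor$, $f(n)=\binom{m}{r-1}(n-m)+\binom{m}{r}+\mathbb{1}_{2\mid k}\binom{m}{r-2}$, and $N_{k,r}=\binom{r(k-1)}{r}+\binom{m}{r-1}m-\binom{m}{r}-\mathbb{1}_{2\mid k}\binom{m}{r-2}+r(k-1)$. Let $n>N_{k,r}$ and let $\mathcal H$ be a connected $n$-vertex $r$-graph with no Berge-path of length $k$ and with at least $f(n)$ hyperedges. Let $\mathcal H'$ be obtained from $\mathcal H$ by repeatedly deleting a vertex whose degree in the current hypergraph is less than $\binom{m}{r-1}$, together with all hyperedges containing it, until no such vertex remains. Then $\mathcal H'$ is connected.
   Context: An $r$-graph is a simple $r$-uniform hypergraph; the degree of a vertex is the number of hyperedges containing it; a hypergraph is connected if any two vertices are joined by a sequence of hyperedges with consecutive ones intersecting (equivalently, by a Berge-path). A Berge-path of length $t$ is an alternating sequence $v_1,e_1,\dots,e_t,v_{t+1}$ of $t+1$ distinct vertices and $t$ distinct hyperedges with $\{v_i,v_{i+1}\}\subseteq e_i$. $\mathbb{1}_{2\mid k}$ is $1$ if $k$ is even and $0$ otherwise. *)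

theory Defs
  imports Main
begin

definition r_graph :: "nat \<Rightarrow> 'a set \<Rightarrow> 'a set set \<Rightarrow> bool" where
  "r_graph r V E \<longleftrightarrow> finite V \<and> (\<forall>e\<in>E. e \<subseteq> V \<and> card e = r)"

definition hdegree :: "'a set set \<Rightarrow> 'a \<Rightarrow> nat" where
  "hdegree E v = card {e\<in>E. v \<in> e}"

definition hconnected :: "'a set \<Rightarrow> 'a set set \<Rightarrow> bool" where
  "hconnected V E \<longleftrightarrow>
     (\<forall>u\<in>V. \<forall>w\<in>V. u \<noteq> w \<longrightarrow>
        (\<exists>es. es \<noteq> [] \<and> set es \<subseteq> E \<and> u \<in> hd es \<and> w \<in> last es \<and>
              (\<forall>i. Suc i < length es \<longrightarrow> es ! i \<inter> es ! Suc i \<noteq> {})))"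

definition berge_path :: "'a set set \<Rightarrow> 'a list \<Rightarrow> 'a set list \<Rightarrow> bool" where
  "berge_path E vs es \<longleftrightarrow>
     length vs = Suc (length es) \<and> distinct vs \<and> distinct es \<and> set es \<subseteq> E \<and>
     (\<forall>i < length es. {vs ! i, vs ! Suc i} \<subseteq> es ! i)"

definition has_berge_path :: "'a set set \<Rightarrow> nat \<Rightarrow> bool" where
  "has_berge_path E t \<longleftrightarrow> (\<exists>vs es. berge_path E vs es \<and> length es = t)"

inductive peel_step :: "nat \<Rightarrow> 'a set \<times> 'a set set \<Rightarrow> 'a set \<times> 'a set set \<Rightarrow> bool"
  for d where
  "v \<in> V \<Longrightarrow> hdegree E v < d \<Longrightarrow> peel_step d (V, E) (V - {v}, {e\<in>E. v \<notin> e})"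

definition ind_even :: "nat \<Rightarrow> nat" where
  "ind_even k = (if even k then 1 else 0)"

end

theory Submission
  imports Defs
begin
fun wpath :: "'a list \<Rightarrow> 'a set list \<Rightarrow> bool" where
  "wpath [v] [] = True"
| "wpath (v # w # vs) (e # es) = ({v, w} \<subseteq> e \<and> wpath (w # vs) es)"
| "wpath _ _ = False"

lemma wpath_nth_iff:
  "wpath vs es \<longleftrightarrow> length vs = Suc (length es) \<and> (\<forall>i<length es. {vs ! i, vs ! Suc i} \<subseteq> es ! i)"
proof (induction vs es rule: wpath.induct)
  case (2 v w vs e es)
  show ?case
  proof
    assume H: "wpath (v # w # vs) (e # es)"
    then show "length (v # w # vs) = Suc (length (e # es)) \<and> (\<forall>i<length (e # es). {(v # w # vs) ! i, (v # w # vs) ! Suc i} \<subseteq> (e # es) ! i)"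
      using 2 by (auto simp: less_Suc_eq_0_disj)
  next
    assume H: "length (v # w # vs) = Suc (length (e # es)) \<and> (\<forall>i<length (e # es). {(v # w # vs) ! i, (v # w # vs) ! Suc i} \<subseteq> (e # es) ! i)"
    have "{v,w} \<subseteq> e" using H[THEN conjunct2, rule_format, of 0] by simp
    moreover have "wpath (w # vs) es"
      using 2 H by (auto)
    ultimately show "wpath (v # w # vs) (e # es)" by simp
  qed
next
  case ("3_1" es) then show ?case by (cases es) auto
qed auto

lemma wpath_len: "wpath vs es \<Longrightarrow> length vs = Suc (length es)"
  by (simp add: wpath_nth_iff)

lemma wpath_ne: "wpath vs es \<Longrightarrow> vs \<noteq> []"
  by (auto dest: wpath_len)

lemma wpath_edge: "wpath vs es \<Longrightarrow> i < length es \<Longrightarrow> vs ! i \<in> es ! i \<and> vs ! Suc i \<in> es ! i"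
  by (simp add: wpath_nth_iff)

lemma wpath_single[simp]: "wpath [v] es \<longleftrightarrow> es = []"
  by (cases es) auto

lemma wpath_glue:
  "wpath xs es1 \<Longrightarrow> wpath ys es2 \<Longrightarrow> last xs = hd ys \<Longrightarrow> wpath (xs @ tl ys) (es1 @ es2)"
proof (induction xs es1 rule: wpath.induct)
  case (1 v)
  then show ?case using wpath_ne[of ys es2] by (cases ys) auto
next
  case (2 v w vs e es)
  then show ?case by auto
qed auto

lemma wpath_join:
  "wpath (xs @ [a]) es1 \<Longrightarrow> {a, b} \<subseteq> g \<Longrightarrow> wpath (b # ys) es2 \<Longrightarrow> wpath (xs @ a # b # ys) (es1 @ g # es2)"
proof -
  assume A: "wpath (xs @ [a]) es1" "{a, b} \<subseteq> g" "wpath (b # ys) es2"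
  have "wpath (a # b # ys) (g # es2)" using A by simp
  from wpath_glue[OF A(1) this] show ?thesis by simp
qed

lemma wpath_snoc: "wpath vs es \<Longrightarrow> {last vs, z} \<subseteq> e \<Longrightarrow> wpath (vs @ [z]) (es @ [e])"
  using wpath_glue[of vs es "[last vs, z]" "[e]"] by simp

lemma wpath_rev: "wpath vs es \<Longrightarrow> wpath (rev vs) (rev es)"
  unfolding wpath_nth_iff
proof (intro conjI allI impI)
  fix i assume H: "length vs = Suc (length es) \<and> (\<forall>i<length es. {vs ! i, vs ! Suc i} \<subseteq> es ! i)"
    and i: "i < length (rev es)"
  let ?j = "length es - Suc i"
  have j: "?j < length es" using i by simp
  have "rev vs ! i = vs ! Suc ?j" using H i by (simp add: rev_nth Suc_diff_Suc)
  moreover have "rev vs ! Suc i = vs ! ?j" using H i by (simp add: rev_nth)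
  moreover have "rev es ! i = es ! ?j" using i by (simp add: rev_nth)
  ultimately show "{rev vs ! i, rev vs ! Suc i} \<subseteq> rev es ! i" using H j by auto
qed auto

lemma wpath_take: "wpath vs es \<Longrightarrow> n \<le> length es \<Longrightarrow> wpath (take (Suc n) vs) (take n es)"
  unfolding wpath_nth_iff by auto

lemma wpath_drop: "wpath vs es \<Longrightarrow> n \<le> length es \<Longrightarrow> wpath (drop n vs) (drop n es)"
  unfolding wpath_nth_iff by auto

lemma wpath_set_edges: "wpath vs es \<Longrightarrow> length es \<ge> 1 \<Longrightarrow> x \<in> set vs \<Longrightarrow> \<exists>e\<in>set es. x \<in> e"
proof -
  assume A: "wpath vs es" "length es \<ge> 1" "x \<in> set vs"
  then obtain i where i: "i < length vs" "vs ! i = x" by (auto simp: in_set_conv_nth)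
  show ?thesis
  proof (cases "i < length es")
    case True then show ?thesis using wpath_edge[OF A(1) True] i by (metis nth_mem)
  next
    case False
    then have "i = Suc (length es - 1)" using i wpath_len[OF A(1)] A(2) by simp
    moreover have "length es - 1 < length es" using A(2) by simp
    ultimately show ?thesis using wpath_edge[OF A(1), of "length es - 1"] i
      by (metis nth_mem)
  qed
qed

lemma berge_of_wpath:
  assumes "wpath vs es" "distinct vs" "distinct es" "set es \<subseteq> E" "k \<le> length es"
  shows "has_berge_path E k"
proof -
  have w: "wpath (take (Suc k) vs) (take k es)" using wpath_take[OF assms(1,5)] .
  have "berge_path E (take (Suc k) vs) (take k es)"
    unfolding berge_path_def using w assms
    by (auto simp: wpath_nth_iff dest: in_set_takeD)
  then show ?thesis unfolding has_berge_path_def using assms(5) by force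
qed

lemma card_subsets_with:
  assumes "finite S" "y \<in> S"
  shows "card {T. T \<subseteq> S \<and> card T = Suc j \<and> y \<in> T} = (card S - 1) choose j"
proof -
  have eq: "{T. T \<subseteq> S \<and> card T = Suc j \<and> y \<in> T} = insert y ` {T. T \<subseteq> S - {y} \<and> card T = j}"
  proof
    show "{T. T \<subseteq> S \<and> card T = Suc j \<and> y \<in> T} \<subseteq> insert y ` {T. T \<subseteq> S - {y} \<and> card T = j}"
    proof
      fix T assume T: "T \<in> {T. T \<subseteq> S \<and> card T = Suc j \<and> y \<in> T}"
      then have "finite T" using assms(1) finite_subset by blast
      then have "T = insert y (T - {y})" "card (T - {y}) = j" using T by auto
      moreover have "T - {y} \<subseteq> S - {y}" using T by auto
      ultimately show "T \<in> insert y ` {T. T \<subseteq> S - {y} \<and> card T = j}" by blast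
    qed
  next
    show "insert y ` {T. T \<subseteq> S - {y} \<and> card T = j} \<subseteq> {T. T \<subseteq> S \<and> card T = Suc j \<and> y \<in> T}"
    proof
      fix T assume "T \<in> insert y ` {T. T \<subseteq> S - {y} \<and> card T = j}"
      then obtain T0 where T0: "T = insert y T0" "T0 \<subseteq> S - {y}" "card T0 = j" by auto
      then have "finite T0" using assms(1) finite_subset by blast
      moreover have "y \<notin> T0" using T0 by blast
      ultimately show "T \<in> {T. T \<subseteq> S \<and> card T = Suc j \<and> y \<in> T}" using T0 assms by auto
    qed
  qed
  have inj: "inj_on (insert y) {T. T \<subseteq> S - {y} \<and> card T = j}"
    by (rule inj_onI) blast
  have "card {T. T \<subseteq> S \<and> card T = Suc j \<and> y \<in> T} = card {T. T \<subseteq> S - {y} \<and> card T = j}"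
    using eq card_image[OF inj] by simp
  also have "\<dots> = card (S - {y}) choose j" using n_subsets assms by blast
  finally show ?thesis using assms by simp
qed

lemma card_subsets_with2:
  assumes "finite S" "y \<in> S" "x \<in> S" "x \<noteq> y"
  shows "card {T. T \<subseteq> S \<and> card T = Suc (Suc j) \<and> y \<in> T \<and> x \<in> T} = (card S - 2) choose j"
proof -
  have eq: "{T. T \<subseteq> S \<and> card T = Suc (Suc j) \<and> y \<in> T \<and> x \<in> T} = (\<lambda>T. insert y (insert x T)) ` {T. T \<subseteq> S - {x, y} \<and> card T = j}"
  proof
    show "{T. T \<subseteq> S \<and> card T = Suc (Suc j) \<and> y \<in> T \<and> x \<in> T} \<subseteq> (\<lambda>T. insert y (insert x T)) ` {T. T \<subseteq> S - {x, y} \<and> card T = j}"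
    proof
      fix T assume T: "T \<in> {T. T \<subseteq> S \<and> card T = Suc (Suc j) \<and> y \<in> T \<and> x \<in> T}"
      then have "finite T" using assms(1) finite_subset by blast
      then have "T = insert y (insert x (T - {x, y}))" "card (T - {x, y}) = j" using T assms(4) by auto
      moreover have "T - {x, y} \<subseteq> S - {x, y}" using T by auto
      ultimately show "T \<in> (\<lambda>T. insert y (insert x T)) ` {T. T \<subseteq> S - {x, y} \<and> card T = j}" by blast
    qed
  next
    show "(\<lambda>T. insert y (insert x T)) ` {T. T \<subseteq> S - {x, y} \<and> card T = j} \<subseteq> {T. T \<subseteq> S \<and> card T = Suc (Suc j) \<and> y \<in> T \<and> x \<in> T}"
    proof
      fix T assume "T \<in> (\<lambda>T. insert y (insert x T)) ` {T. T \<subseteq> S - {x, y} \<and> card T = j}"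
      then obtain T0 where T0: "T = insert y (insert x T0)" "T0 \<subseteq> S - {x, y}" "card T0 = j" by auto
      then have "finite T0" using assms(1) finite_subset by blast
      moreover have "y \<notin> T0" "x \<notin> T0" using T0 by blast+
      ultimately show "T \<in> {T. T \<subseteq> S \<and> card T = Suc (Suc j) \<and> y \<in> T \<and> x \<in> T}" using T0 assms by auto
    qed
  qed
  have inj: "inj_on (\<lambda>T. insert y (insert x T)) {T. T \<subseteq> S - {x, y} \<and> card T = j}"
    by (rule inj_onI) blast
  have "card {T. T \<subseteq> S \<and> card T = Suc (Suc j) \<and> y \<in> T \<and> x \<in> T} = card {T. T \<subseteq> S - {x, y} \<and> card T = j}"
    using eq card_image[OF inj] by simp
  also have "\<dots> = card (S - {x, y}) choose j" using n_subsets assms by blast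
  also have "card (S - {x, y}) = card S - 2" using assms by (simp add: card_Diff_subset)
  finally show ?thesis .
qed

lemma binom_ge_n: "1 \<le> j \<Longrightarrow> j < n \<Longrightarrow> n \<le> n choose j"
proof (induction n arbitrary: j)
  case 0 then show ?case by simp
next
  case (Suc n)
  obtain j' where j': "j = Suc j'" using Suc.prems by (cases j) auto
  show ?case
  proof (cases "j' = 0")
    case True then show ?thesis using j' by simp
  next
    case False
    have "n \<le> n choose j'" using Suc.IH[of j'] False j' Suc.prems by simp
    moreover have "n choose Suc j' \<noteq> 0" using j' Suc.prems by simp
    then have "1 \<le> n choose Suc j'" by linarith
    ultimately show ?thesis using j' by simp
  qed
qed

locale hg =
  fixes F :: "'a set set" and r m :: nat
  assumes cardF: "\<And>e. e \<in> F \<Longrightarrow> finite e \<and> card e = r"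
    and r3: "3 \<le> r" and mr: "r + 6 \<le> m" and finF: "finite F"
begin

definition dd :: nat where "dd = m choose (r - 1)"
definition deg :: "'a \<Rightarrow> nat" where "deg x = card {e\<in>F. x \<in> e}"

lemma dd_split: "dd = ((m - 1) choose (r - 2)) + ((m - 1) choose (r - 1))"
proof -
  have "m = Suc (m - 1)" "r - 1 = Suc (r - 2)" using r3 mr by auto
  then have "m choose (r - 1) = Suc (m - 1) choose Suc (r - 2)" by simp
  also have "\<dots> = ((m - 1) choose (r - 2)) + ((m - 1) choose Suc (r - 2))" by simp
  finally show ?thesis unfolding dd_def using \<open>r - 1 = Suc (r - 2)\<close> by simp
qed

lemma bnd: "(if r = 3 then 3 else m) < (m - 1) choose (r - 2)"
proof (cases "r = 3")
  case True
  then show ?thesis using mr by simp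
next
  case False
  have e: "m - 1 = Suc (m - 2)" "r - 2 = Suc (r - 3)" using r3 mr False by auto
  have "(m - 1) choose (r - 2) = ((m - 2) choose (r - 3)) + ((m - 2) choose (r - 2))"
    using e by simp
  moreover have "m - 2 \<le> (m - 2) choose (r - 3)" using binom_ge_n[of "r - 3" "m - 2"] False r3 mr by simp
  moreover have "m - 2 \<le> (m - 2) choose (r - 2)" using binom_ge_n[of "r - 2" "m - 2"] False r3 mr by simp
  ultimately show ?thesis using False mr by (simp only: if_False) linarith
qed

lemma dd_pos: "0 < dd"
  unfolding dd_def using mr by simp

lemma r3_edge:
  assumes "r = 3" "wpath vs es" "distinct vs" "Suc j < length es" "es ! j \<in> F" "last vs \<in> es ! j"
  shows "es ! j = {vs ! j, vs ! Suc j, last vs}"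
proof -
  have L: "length vs = Suc (length es)" using wpath_len[OF assms(2)] .
  have "vs \<noteq> []" using L by auto
  then have lv: "last vs = vs ! length es" using L by (simp add: last_conv_nth)
  have d1: "vs ! j \<noteq> vs ! Suc j" "vs ! j \<noteq> vs ! length es" "vs ! Suc j \<noteq> vs ! length es"
    using assms(3,4) L by (auto simp: nth_eq_iff_index_eq)
  have sub: "{vs ! j, vs ! Suc j, last vs} \<subseteq> es ! j"
    using wpath_edge[OF assms(2), of j] assms(4,6) by auto
  have c: "card {vs ! j, vs ! Suc j, last vs} = 3" using d1 lv by simp
  have "finite (es ! j)" "card (es ! j) = 3" using cardF[OF assms(5)] assms(1) by auto
  then show ?thesis using card_subset_eq[OF _ sub] c by simp
qed

lemma B_bound:
  assumes "wpath vs es" "distinct vs" "set es \<subseteq> F" "1 \<le> length es"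
  shows "card {e \<in> set es. last vs \<in> e \<and> \<not> e \<subseteq> set vs} \<le> (if r = 3 then 1 else length es)"
proof (cases "r = 3")
  case True
  have "{e \<in> set es. last vs \<in> e \<and> \<not> e \<subseteq> set vs} \<subseteq> {es ! (length es - 1)}"
  proof
    fix e assume e: "e \<in> {e \<in> set es. last vs \<in> e \<and> \<not> e \<subseteq> set vs}"
    then obtain j where j: "j < length es" "es ! j = e" by (auto simp: in_set_conv_nth)
    show "e \<in> {es ! (length es - 1)}"
    proof (cases "Suc j < length es")
      case True
      have "es ! j = {vs ! j, vs ! Suc j, last vs}"
        using r3_edge[OF \<open>r = 3\<close> assms(1,2) True] j e assms(3) by auto
      moreover have "vs ! j \<in> set vs" "vs ! Suc j \<in> set vs" "last vs \<in> set vs"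
        using j wpath_len[OF assms(1)] wpath_ne[OF assms(1)] by auto
      ultimately show ?thesis using e j by auto
    next
      case False
      then have "j = length es - 1" using j by simp
      then show ?thesis using j by simp
    qed
  qed
  then have "card {e \<in> set es. last vs \<in> e \<and> \<not> e \<subseteq> set vs} \<le> 1"
    by (metis card.empty card.insert empty_iff finite.intros(1) card_mono finite.emptyI finite_insert le_zero_eq One_nat_def)
  then show ?thesis using True by simp
next
  case False
  have "card {e \<in> set es. last vs \<in> e \<and> \<not> e \<subseteq> set vs} \<le> card (set es)"
    by (rule card_mono) auto
  also have "\<dots> \<le> length es" by (rule card_length)
  finally show ?thesis using False by simp
qed

lemma Z_bound:
  assumes "wpath vs es" "distinct vs" "set es \<subseteq> F" "Suc i < length es"
  shows "card {e \<in> set es. last vs \<in> e \<and> (vs ! i \<in> e \<or> \<not> e \<subseteq> set vs)} \<le> (if r = 3 then 3 else length es)"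
proof (cases "r = 3")
  case True
  have L: "length vs = Suc (length es)" using wpath_len[OF assms(1)] .
  have "{e \<in> set es. last vs \<in> e \<and> (vs ! i \<in> e \<or> \<not> e \<subseteq> set vs)} \<subseteq> {es ! (i - 1), es ! i, es ! (length es - 1)}"
  proof
    fix e assume e: "e \<in> {e \<in> set es. last vs \<in> e \<and> (vs ! i \<in> e \<or> \<not> e \<subseteq> set vs)}"
    then obtain j where j: "j < length es" "es ! j = e" by (auto simp: in_set_conv_nth)
    show "e \<in> {es ! (i - 1), es ! i, es ! (length es - 1)}"
    proof (cases "Suc j < length es")
      case True
      have eq: "es ! j = {vs ! j, vs ! Suc j, last vs}"
        using r3_edge[OF \<open>r = 3\<close> assms(1,2) True] j e assms(3) by auto
      moreover have "vs ! j \<in> set vs" "vs ! Suc j \<in> set vs" "last vs \<in> set vs"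
        using j L wpath_ne[OF assms(1)] by auto
      ultimately have "vs ! i \<in> e" using e j by auto
      then have "vs ! i = vs ! j \<or> vs ! i = vs ! Suc j \<or> vs ! i = last vs" using eq j by auto
      moreover have "last vs = vs ! length es" using L last_conv_nth[of vs] by (cases vs) auto
      ultimately have "i = j \<or> i = Suc j \<or> i = length es"
        using assms(2,4) j L by (auto simp: nth_eq_iff_index_eq)
      then have "j = i \<or> j = i - 1" using assms(4) by auto
      then show ?thesis using j by auto
    next
      case False
      then have "j = length es - 1" using j by simp
      then show ?thesis using j by simp
    qed
  qed
  then have "card {e \<in> set es. last vs \<in> e \<and> (vs ! i \<in> e \<or> \<not> e \<subseteq> set vs)} \<le> card {es ! (i - 1), es ! i, es ! (length es - 1)}"
    by (rule card_mono[rotated]) simp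
  also have "\<dots> \<le> 3" by (simp add: card_insert_if)
  finally show ?thesis using True by simp
next
  case False
  have "card {e \<in> set es. last vs \<in> e \<and> (vs ! i \<in> e \<or> \<not> e \<subseteq> set vs)} \<le> card (set es)"
    by (rule card_mono) auto
  also have "\<dots> \<le> length es" by (rule card_length)
  finally show ?thesis using False by simp
qed

end

context hg begin

lemma finite_edges_at: "finite {g\<in>F. P g}" using finF by simp

lemma stuck_false:
  assumes "wpath vs es" "distinct vs" "set es \<subseteq> F" "1 \<le> length es" "length es < m"
    and "dd \<le> deg (last vs)"
    and H: "\<forall>g\<in>F. last vs \<in> g \<and> g \<notin> set es \<longrightarrow> g \<subseteq> set vs"
  shows False
proof -
  let ?y = "last vs" let ?S = "set vs"
  have L: "length vs = Suc (length es)" using wpath_len[OF assms(1)] .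
  have cS: "card ?S = Suc (length es)" using distinct_card[OF assms(2)] L by simp
  have yS: "?y \<in> ?S" using L by (cases vs) auto
  have rr: "r = Suc (r - 1)" using r3 by simp
  let ?A = "{T. T \<subseteq> ?S \<and> card T = Suc (r - 1) \<and> ?y \<in> T}"
  let ?B = "{e \<in> set es. ?y \<in> e \<and> \<not> e \<subseteq> ?S}"
  have sub: "{g\<in>F. ?y \<in> g} \<subseteq> ?A \<union> ?B"
  proof
    fix g assume g: "g \<in> {g\<in>F. ?y \<in> g}"
    show "g \<in> ?A \<union> ?B"
    proof (cases "g \<in> set es \<and> \<not> g \<subseteq> ?S")
      case True then show ?thesis using g by auto
    next
      case False
      then have "g \<subseteq> ?S" using H g by auto
      then show ?thesis using g cardF[of g] rr by auto
    qed
  qed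
  have cA: "card ?A = length es choose (r - 1)"
    using card_subsets_with[OF _ yS, of "r - 1"] cS by simp
  have "length es choose (r - 1) \<le> (m - 1) choose (r - 1)"
    using assms(5) by (intro binomial_right_mono) simp
  moreover have "card ?B \<le> (if r = 3 then 1 else length es)" using B_bound[OF assms(1-4)] .
  moreover have "(if r = 3 then 1 else length es) < (m - 1) choose (r - 2)"
    using bnd assms(5) by (auto split: if_splits)
  moreover have "deg ?y \<le> card ?A + card ?B"
  proof -
    have "deg ?y \<le> card (?A \<union> ?B)" unfolding deg_def
      by (rule card_mono[OF _ sub]) (auto intro: finite_subset[of _ "Pow ?S"])
    also have "\<dots> \<le> card ?A + card ?B" by (rule card_Un_le)
    finally show ?thesis .
  qed
  ultimately show False using assms(6) dd_split cA by linarith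
qed

lemma rot_edge:
  assumes "wpath vs es" "distinct vs" "set es \<subseteq> F" "length es = m" "Suc i < m"
    and "dd \<le> deg (last vs)"
    and H: "\<forall>g\<in>F. last vs \<in> g \<and> g \<notin> set es \<longrightarrow> g \<subseteq> set vs"
  shows "\<exists>g\<in>F. g \<subseteq> set vs \<and> g \<notin> set es \<and> vs ! i \<in> g \<and> last vs \<in> g"
proof (rule ccontr)
  assume N: "\<not> ?thesis"
  let ?y = "last vs" let ?S = "set vs" let ?x = "vs ! i"
  have L: "length vs = Suc (length es)" using wpath_len[OF assms(1)] .
  have cS: "card ?S = Suc m" using distinct_card[OF assms(2)] L assms(4) by simp
  have yS: "?y \<in> ?S" using L by (cases vs) auto
  have lv: "?y = vs ! m" using L assms(4) last_conv_nth[of vs] by (cases vs) auto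
  have xS: "?x \<in> ?S" using L assms(4,5) by simp
  have xy: "?x \<noteq> ?y" using lv assms(2,4,5) L by (simp add: nth_eq_iff_index_eq)
  have rr: "r = Suc (r - 1)" "r = Suc (Suc (r - 2))" using r3 by auto
  let ?AA = "{T. T \<subseteq> ?S \<and> card T = Suc (r - 1) \<and> ?y \<in> T}"
  let ?A = "{g\<in>F. ?y \<in> g \<and> g \<subseteq> ?S}"
  let ?B = "{e \<in> set es. ?y \<in> e \<and> \<not> e \<subseteq> ?S}"
  let ?B' = "{e \<in> set es. ?y \<in> e \<and> ?x \<in> e \<and> e \<subseteq> ?S}"
  let ?TT = "{T. T \<subseteq> ?S \<and> card T = Suc (Suc (r - 2)) \<and> ?y \<in> T \<and> ?x \<in> T}"
  have finAA: "finite ?AA" by (rule finite_subset[of _ "Pow ?S"]) auto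
  have AsubAA: "?A \<subseteq> ?AA" using cardF rr by auto
  have cAA: "card ?AA = dd" using card_subsets_with[OF _ yS, of "r - 1"] cS unfolding dd_def by simp
  have cTT: "card ?TT = (m - 1) choose (r - 2)" using card_subsets_with2[OF _ yS xS xy, of "r - 2"] cS by simp
  have sub: "{g\<in>F. ?y \<in> g} \<subseteq> ?A \<union> ?B" using H by auto
  have "deg ?y \<le> card (?A \<union> ?B)" unfolding deg_def
    by (rule card_mono[OF _ sub]) (auto intro: finite_subset[OF AsubAA finAA])
  also have "\<dots> \<le> card ?A + card ?B" by (rule card_Un_le)
  finally have degAB: "deg ?y \<le> card ?A + card ?B" .
  have TTsub: "?TT \<subseteq> (?AA - ?A) \<union> ?B'"
  proof
    fix T assume T: "T \<in> ?TT"
    show "T \<in> (?AA - ?A) \<union> ?B'"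
    proof (cases "T \<in> F")
      case True
      then have "T \<in> set es" using N T by auto
      then show ?thesis using T by auto
    next
      case False then show ?thesis using T rr by auto
    qed
  qed
  have "card ?TT \<le> card ((?AA - ?A) \<union> ?B')"
    by (rule card_mono[OF _ TTsub]) (auto intro: finite_subset[OF _ finAA])
  also have "\<dots> \<le> card (?AA - ?A) + card ?B'" by (rule card_Un_le)
  also have "card (?AA - ?A) = card ?AA - card ?A"
    using card_Diff_subset[OF finite_subset[OF AsubAA finAA] AsubAA] .
  finally have T1: "card ?TT \<le> card ?AA - card ?A + card ?B'" .
  have "card ?B + card ?B' = card (?B \<union> ?B')"
    by (rule card_Un_disjoint[symmetric]) auto
  also have "\<dots> \<le> card {e \<in> set es. ?y \<in> e \<and> (?x \<in> e \<or> \<not> e \<subseteq> ?S)}"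
    by (rule card_mono) auto
  also have "\<dots> \<le> (if r = 3 then 3 else length es)"
    using Z_bound[OF assms(1-3)] assms(4,5) by simp
  finally have T2: "card ?B + card ?B' \<le> (if r = 3 then 3 else m)" using assms(4) by (simp split: if_splits)
  show False using T1 T2 cTT cAA degAB assms(6) bnd by linarith
qed

end

context hg begin

definition upath :: "'a \<Rightarrow> 'a list \<Rightarrow> 'a set list \<Rightarrow> bool" where
  "upath u vs es \<longleftrightarrow> wpath vs es \<and> hd vs = u \<and> distinct vs \<and> distinct es \<and> set es \<subseteq> F"

definition bad :: "'a \<Rightarrow> bool" where
  "bad u \<longleftrightarrow> \<not> (\<exists>vs es. upath u vs es \<and> length es = Suc m)"

definition cpath :: "'a set \<Rightarrow> 'a \<Rightarrow> 'a list \<Rightarrow> 'a set list \<Rightarrow> bool" where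
  "cpath C u vs es \<longleftrightarrow> upath u vs es \<and> (\<forall>e\<in>set es. e \<subseteq> C)"

definition good_set :: "'a set \<Rightarrow> 'a \<Rightarrow> bool" where
  "good_set C u \<longleftrightarrow> finite C \<and> u \<in> C \<and> (\<forall>e\<in>F. e \<inter> (C - {u}) \<noteq> {} \<longrightarrow> e \<subseteq> C) \<and> (\<forall>x\<in>C-{u}. dd \<le> deg x)"

lemma cpath_verts:
  assumes "cpath C u vs es" "u \<in> C"
  shows "set vs \<subseteq> C"
proof
  fix x assume x: "x \<in> set vs"
  have w: "wpath vs es" and h: "hd vs = u" using assms unfolding cpath_def upath_def by auto
  show "x \<in> C"
  proof (cases "es = []")
    case True
    then have "vs = [u]" using w h wpath_len[OF w] by (cases vs) auto
    then show ?thesis using x assms by simp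
  next
    case False
    then obtain e where "e \<in> set es" "x \<in> e" using wpath_set_edges[OF w _ x] by (cases es) auto
    then show ?thesis using assms unfolding cpath_def by auto
  qed
qed

lemma last_ne_hd:
  assumes "wpath vs es" "distinct vs" "1 \<le> length es"
  shows "last vs \<noteq> hd vs"
proof -
  have L: "length vs = Suc (length es)" using wpath_len[OF assms(1)] .
  then obtain a b rest where "vs = a # b # rest" using assms(3)
    by (cases vs; cases "tl vs") auto
  then show ?thesis using assms(2) by auto
qed

lemma greedy:
  assumes gs: "good_set C u" and g0: "g0 \<in> F" "u \<in> g0" "g0 \<subseteq> C"
  shows "\<exists>vs es. cpath C u vs es \<and> length es = m"
proof -
  have "\<forall>j. 1 \<le> j \<and> j \<le> m \<longrightarrow> (\<exists>vs es. cpath C u vs es \<and> length es = j)"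
  proof (intro allI impI)
    fix j assume "1 \<le> j \<and> j \<le> m"
    then show "\<exists>vs es. cpath C u vs es \<and> length es = j"
    proof (induction j)
      case 0 then show ?case by simp
    next
      case (Suc j)
      show ?case
      proof (cases "j = 0")
        case True
        have "card g0 = r" "finite g0" using cardF[OF g0(1)] by auto
        then have "g0 - {u} \<noteq> {}" using r3 by (metis Diff_empty card_Diff_insert empty_iff
            card_1_singleton_iff insert_Diff g0(2) le_zero_eq numeral_le_iff semiring_norm(69) card.empty
            not_numeral_le_zero One_nat_def Suc_n_not_le_n numeral_3_eq_3 card_Suc_Diff1 Suc_le_mono zero_less_Suc
            less_numeral_extra(3) numeral_2_eq_2)
        then obtain z where z: "z \<in> g0" "z \<noteq> u" by auto
        have "cpath C u [u, z] [g0]" unfolding cpath_def upath_def using z g0 by auto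
        then show ?thesis using True by force
      next
        case False
        then obtain vs es where P: "cpath C u vs es" "length es = j" using Suc by auto
        have w: "wpath vs es" and h: "hd vs = u" and dv: "distinct vs" and de: "distinct es"
          and sF: "set es \<subseteq> F" and sC: "\<forall>e\<in>set es. e \<subseteq> C"
          using P(1) unfolding cpath_def upath_def by auto
        have j1: "1 \<le> length es" using P False by simp
        have yu: "last vs \<noteq> u" using last_ne_hd[OF w dv j1] h by simp
        have yC: "last vs \<in> C" using cpath_verts[OF P(1)] gs wpath_ne[OF w] unfolding good_set_def by auto
        have dy: "dd \<le> deg (last vs)" using gs yu yC unfolding good_set_def by auto
        show ?thesis
        proof (cases "\<exists>g\<in>F. last vs \<in> g \<and> g \<notin> set es \<and> \<not> g \<subseteq> set vs")
          case True
          then obtain g z where g: "g \<in> F" "last vs \<in> g" "g \<notin> set es" "z \<in> g" "z \<notin> set vs" by auto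
          have gC: "g \<subseteq> C" using gs g yu yC unfolding good_set_def by blast
          have "cpath C u (vs @ [z]) (es @ [g])"
            unfolding cpath_def upath_def
            using wpath_snoc[OF w, of z g] g h dv de sF sC gC wpath_ne[OF w] by auto
          then show ?thesis using P(2) by force
        next
          case False
          then have "\<forall>g\<in>F. last vs \<in> g \<and> g \<notin> set es \<longrightarrow> g \<subseteq> set vs" by blast
          then have False using stuck_false[OF w dv sF j1 _ dy] P(2) Suc.prems by simp
          then show ?thesis ..
        qed
      qed
    qed
  qed
  then show ?thesis using mr by auto
qed

end

context hg begin

lemma closure_end:
  assumes b: "bad u" and gs: "good_set C u" and P: "cpath C u vs es" "length es = m"
    and g: "g \<in> F" "last vs \<in> g" "g \<notin> set es"
  shows "g \<subseteq> set vs"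
proof (rule ccontr)
  assume "\<not> g \<subseteq> set vs"
  then obtain z where z: "z \<in> g" "z \<notin> set vs" by auto
  have w: "wpath vs es" and h: "hd vs = u" and dv: "distinct vs" and de: "distinct es"
    and sF: "set es \<subseteq> F"
    using P(1) unfolding cpath_def upath_def by auto
  have "upath u (vs @ [z]) (es @ [g])"
    unfolding upath_def
    using wpath_snoc[OF w, of z g] g z h dv de sF wpath_ne[OF w] by auto
  then show False using b P(2) unfolding bad_def by force
qed

lemma deg_last:
  assumes gs: "good_set C u" and P: "cpath C u vs es" "1 \<le> length es"
  shows "dd \<le> deg (last vs)" "last vs \<noteq> u" "last vs \<in> C"
proof -
  have w: "wpath vs es" and h: "hd vs = u" and dv: "distinct vs"
    using P(1) unfolding cpath_def upath_def by auto
  show yu: "last vs \<noteq> u" using last_ne_hd[OF w dv P(2)] h by simp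
  show yC: "last vs \<in> C" using cpath_verts[OF P(1)] gs wpath_ne[OF w] unfolding good_set_def by auto
  show "dd \<le> deg (last vs)" using gs yu yC unfolding good_set_def by auto
qed

lemma rotate:
  assumes b: "bad u" and gs: "good_set C u" and P: "cpath C u vs es" "length es = m"
    and i: "Suc i < m"
  shows "\<exists>g vs' es'. cpath C u vs' es' \<and> length es' = m \<and> set vs' = set vs \<and> g \<notin> set es
     \<and> g \<subseteq> set vs \<and> set es' \<subseteq> insert g (set es - {es ! i}) \<and> last vs' = vs ! Suc i
     \<and> (i = 0 \<longrightarrow> es' ! 1 = es ! (m - 1))"
proof -
  have w: "wpath vs es" and h: "hd vs = u" and dv: "distinct vs" and de: "distinct es"
    and sF: "set es \<subseteq> F" and sC: "\<forall>e\<in>set es. e \<subseteq> C"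
    using P(1) unfolding cpath_def upath_def by auto
  have L: "length vs = Suc m" using wpath_len[OF w] P(2) by simp
  have m1: "1 \<le> length es" using P(2) i by simp
  have H: "\<forall>g\<in>F. last vs \<in> g \<and> g \<notin> set es \<longrightarrow> g \<subseteq> set vs"
    using closure_end[OF b gs P] by blast
  obtain g where g: "g \<in> F" "g \<subseteq> set vs" "g \<notin> set es" "vs ! i \<in> g" "last vs \<in> g"
    using rot_edge[OF w dv sF P(2) i deg_last(1)[OF gs P(1) m1] H] by blast
  define vs' where "vs' = take (Suc i) vs @ rev (drop (Suc i) vs)"
  define es' where "es' = take i es @ g # rev (drop (Suc i) es)"
  have dne: "drop (Suc i) vs \<noteq> []" using L i by simp
  have hdrev: "hd (rev (drop (Suc i) vs)) = last vs" using dne by (simp add: hd_rev)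
  have revne: "rev (drop (Suc i) vs) \<noteq> []" using dne by simp
  have tk: "take (Suc i) vs = take i vs @ [vs ! i]" using L i by (simp add: take_Suc_conv_app_nth)
  have w1: "wpath (take i vs @ [vs ! i]) (take i es)" using wpath_take[OF w, of i] P(2) i tk by simp
  have eqr: "rev (drop (Suc i) vs) = last vs # tl (rev (drop (Suc i) vs))"
    using hdrev revne by (metis list.collapse)
  have w2r: "wpath (rev (drop (Suc i) vs)) (rev (drop (Suc i) es))"
    using wpath_rev[OF wpath_drop[OF w, of "Suc i"]] P(2) i by simp
  have w2: "wpath (last vs # tl (rev (drop (Suc i) vs))) (rev (drop (Suc i) es))"
    using w2r eqr by (metis (no_types))
  have gvi: "{vs ! i, last vs} \<subseteq> g" using g(4,5) by simp
  have "wpath (take i vs @ vs ! i # last vs # tl (rev (drop (Suc i) vs))) es'"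
    unfolding es'_def using wpath_join[OF w1 gvi w2] .
  moreover have "take i vs @ vs ! i # last vs # tl (rev (drop (Suc i) vs)) = vs'"
  proof -
    have "vs' = (take i vs @ [vs ! i]) @ (last vs # tl (rev (drop (Suc i) vs)))"
      unfolding vs'_def using tk eqr by simp
    then show ?thesis by simp
  qed
  ultimately have w': "wpath vs' es'" by simp
  have sv: "set vs' = set vs"
  proof -
    have "set vs = set (take (Suc i) vs @ drop (Suc i) vs)" by simp
    then show ?thesis unfolding vs'_def by (simp only: set_append set_rev)
  qed
  have dv': "distinct vs'"
  proof -
    have "distinct (take (Suc i) vs @ drop (Suc i) vs)" using dv by simp
    then show ?thesis unfolding vs'_def by (simp only: distinct_append distinct_rev set_rev)
  qed
  have esplit: "es = take i es @ es ! i # drop (Suc i) es" using P(2) i by (simp add: id_take_nth_drop)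
  have dsplit: "distinct (take i es @ es ! i # drop (Suc i) es)" using de esplit by simp
  have de': "distinct es'" unfolding es'_def using dsplit g(3)
    by (auto dest: in_set_takeD in_set_dropD)
  have ses': "set es' \<subseteq> insert g (set es - {es ! i})" unfolding es'_def using dsplit
    by (auto dest: in_set_takeD in_set_dropD)
  have h': "hd vs' = u" unfolding vs'_def using h L by (cases vs) auto
  have le': "length es' = m" unfolding es'_def using P(2) i by simp
  have lv': "last vs' = vs ! Suc i" unfolding vs'_def using dne L i
    by (simp add: last_rev hd_drop_conv_nth)
  have sF': "set es' \<subseteq> F" using ses' sF g by auto
  have vC: "set vs \<subseteq> C" using cpath_verts[OF P(1)] gs unfolding good_set_def by simp
  have sC': "\<forall>e\<in>set es'. e \<subseteq> C"
  proof
    fix e assume "e \<in> set es'"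
    then have "e = g \<or> e \<in> set es" using ses' by auto
    then show "e \<subseteq> C" using sC g(2) vC by auto
  qed
  have cp: "cpath C u vs' es'" unfolding cpath_def upath_def using w' h' dv' de' sF' sC' by auto
  have e1: "i = 0 \<longrightarrow> es' ! 1 = es ! (m - 1)"
  proof
    assume i0: "i = 0"
    have ne: "drop 1 es \<noteq> []" using P(2) i i0 by simp
    have "es' ! 1 = rev (drop 1 es) ! 0" unfolding es'_def using i0 by simp
    also have "\<dots> = last (drop 1 es)" using ne by (simp add: hd_conv_nth[symmetric] hd_rev)
    also have "\<dots> = last es" using ne by simp
    also have "\<dots> = es ! (m - 1)" using P(2) i last_conv_nth[of es] by (cases es) auto
    finally show "es' ! 1 = es ! (m - 1)" .
  qed
  have conj: "cpath C u vs' es' \<and> length es' = m \<and> set vs' = set vs \<and> g \<notin> set es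
     \<and> g \<subseteq> set vs \<and> set es' \<subseteq> insert g (set es - {es ! i}) \<and> last vs' = vs ! Suc i
     \<and> (i = 0 \<longrightarrow> es' ! 1 = es ! (m - 1))" using cp le' sv g(2,3) ses' lv' e1 by simp
  show ?thesis by (rule exI[of _ g], rule exI[of _ vs'], rule exI[of _ es'], rule conj)
qed


lemma cpath_parts:
  assumes "cpath C u vs es"
  shows "wpath vs es" "hd vs = u" "distinct vs" "distinct es" "set es \<subseteq> F" "\<forall>e\<in>set es. e \<subseteq> C"
  using assms unfolding cpath_def upath_def by auto

lemma PE_aux:
  assumes b: "bad u" and gs: "good_set C u" and P: "cpath C u vs es" "length es = m"
    and j: "Suc j < m"
  shows "es ! j \<subseteq> set vs"
proof -
  obtain g vs' es' where R: "cpath C u vs' es'" "length es' = m" "set vs' = set vs" "g \<notin> set es"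
     "g \<subseteq> set vs" "set es' \<subseteq> insert g (set es - {es ! j})" "last vs' = vs ! Suc j"
     "j = 0 \<longrightarrow> es' ! 1 = es ! (m - 1)"
    using rotate[OF b gs P j] by (elim exE conjE) (rule that; assumption)
  have ej: "es ! j \<in> set es" using P(2) j by simp
  have F: "es ! j \<in> F" using ej cpath_parts(5)[OF P(1)] by auto
  have n: "es ! j \<notin> set es'" using R(4,6) ej by auto
  have "last vs' \<in> es ! j" using R(7) wpath_edge[OF cpath_parts(1)[OF P(1)], of j] P(2) j by simp
  then have "es ! j \<subseteq> set vs'" using closure_end[OF b gs R(1,2) F _ n] by simp
  then show ?thesis using R(3) by simp
qed

lemma PE:
  assumes b: "bad u" and gs: "good_set C u" and P: "cpath C u vs es" "length es = m"
    and j: "j < m"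
  shows "es ! j \<subseteq> set vs"
proof (cases "Suc j < m")
  case True show ?thesis by (rule PE_aux[OF b gs P True])
next
  case False
  then have jm: "j = m - 1" using j by simp
  have m0: "Suc 0 < m" using mr by simp
  obtain g vs' es' where R: "cpath C u vs' es'" "length es' = m" "set vs' = set vs" "g \<notin> set es"
     "g \<subseteq> set vs" "set es' \<subseteq> insert g (set es - {es ! 0})" "last vs' = vs ! Suc 0"
     "es' ! 1 = es ! (m - 1)"
    using rotate[OF b gs P m0] by (elim exE conjE) (rule that; simp)
  have "Suc 1 < m" using mr by simp
  from PE_aux[OF b gs R(1,2) this] show ?thesis using R(3,8) jm by simp
qed

lemma exits:
  assumes b: "bad u" and gs: "good_set C u" and P: "cpath C u vs es" "length es = m"
    and g: "g \<in> F" "x \<in> g" "x \<in> set vs" "x \<noteq> u"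
  shows "g \<subseteq> set vs"
proof (cases "g \<in> set es")
  case True
  then obtain k where "k < length es" "es ! k = g" by (auto simp: in_set_conv_nth)
  then show ?thesis using PE[OF b gs P] P(2) by auto
next
  case gn: False
  have w: "wpath vs es" and h: "hd vs = u" using cpath_parts[OF P(1)] by auto
  have L: "length vs = Suc m" using wpath_len[OF w] P(2) by simp
  obtain j where j: "j < Suc m" "vs ! j = x" using g(3) L by (auto simp: in_set_conv_nth)
  have "vs ! 0 = u" using h L by (cases vs) auto
  then have j0: "j \<noteq> 0" using j g(4) by (metis)
  show ?thesis
  proof (cases "j = m")
    case True
    then have "x = last vs" using j L last_conv_nth[of vs] by (cases vs) auto
    then show ?thesis using closure_end[OF b gs P g(1) _ gn] g(2) by simp
  next
    case False
    then have jj: "Suc (j - 1) < m" "Suc (j - 1) = j" using j j0 by auto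
    obtain g' vs' es' where R: "cpath C u vs' es'" "length es' = m" "set vs' = set vs" "g' \<notin> set es"
     "g' \<subseteq> set vs" "set es' \<subseteq> insert g' (set es - {es ! (j - 1)})" "last vs' = vs ! Suc (j - 1)"
     "(j - 1) = 0 \<longrightarrow> es' ! 1 = es ! (m - 1)"
      using rotate[OF b gs P jj(1)] by (elim exE conjE) (rule that; assumption)
    show ?thesis
    proof (cases "g = g'")
      case True then show ?thesis using R(5) by simp
    next
      case False
      then have "g \<notin> set es'" using R(6) gn by auto
      moreover have "last vs' \<in> g" using R(7) jj(2) j g(2) by simp
      ultimately show ?thesis using closure_end[OF b gs R(1,2) g(1)] R(3) by simp
    qed
  qed
qed

end

context hg begin

definition adjC :: "'a set \<Rightarrow> 'a \<Rightarrow> 'a \<Rightarrow> bool" where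
  "adjC C a b \<longleftrightarrow> (\<exists>e\<in>F. e \<subseteq> C \<and> a \<in> e \<and> b \<in> e)"

lemma reach_edge:
  assumes "(adjC C)\<^sup>*\<^sup>* u x" "x \<noteq> u"
  shows "\<exists>e\<in>F. e \<subseteq> C \<and> u \<in> e"
  using assms by (cases rule: converse_rtranclpE) (auto simp: adjC_def)

lemma reach_restrict:
  assumes "(adjC C)\<^sup>*\<^sup>* u y" "y \<in> W"
    and ex: "\<forall>g\<in>F. g \<inter> (S - {u}) \<noteq> {} \<longrightarrow> g \<subseteq> S"
    and W: "W = C - (S - {u})"
  shows "(adjC W)\<^sup>*\<^sup>* u y"
  using assms(1,2)
proof (induction rule: rtranclp_induct)
  case base then show ?case by simp
next
  case (step y z)
  then obtain e where e: "e \<in> F" "e \<subseteq> C" "y \<in> e" "z \<in> e" unfolding adjC_def by auto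
  show ?case
  proof (cases "e \<inter> (S - {u}) = {}")
    case True
    then have eW: "e \<subseteq> W" using e W by auto
    then have "(adjC W)\<^sup>*\<^sup>* u y" using step e by auto
    moreover have "adjC W y z" unfolding adjC_def using e eW by auto
    ultimately show ?thesis by (rule rtranclp.rtrancl_into_rtrancl)
  next
    case False
    then have "e \<subseteq> S" using ex e by auto
    then have "z = u" using e step.prems W by auto
    then show ?thesis by simp
  qed
qed

lemma flower:
  "bad u \<Longrightarrow> good_set C u \<Longrightarrow> \<forall>x\<in>C. (adjC C)\<^sup>*\<^sup>* u x \<Longrightarrow>
   m * card {e\<in>F. e \<subseteq> C} \<le> (card C - 1) * (Suc m choose r) \<and> (C \<noteq> {u} \<longrightarrow> Suc m \<le> card C)"
proof (induction "card C" arbitrary: C rule: less_induct)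
  case less
  have finC: "finite C" and uC: "u \<in> C" using less.prems(2) unfolding good_set_def by auto
  show ?case
  proof (cases "C = {u}")
    case True
    have "{e\<in>F. e \<subseteq> C} = {}"
    proof (rule ccontr)
      assume "{e\<in>F. e \<subseteq> C} \<noteq> {}"
      then obtain e where e: "e \<in> F" "e \<subseteq> {u}" using True by auto
      then have "card e \<le> 1" using card_mono[OF _ e(2)] by simp
      then show False using cardF[OF e(1)] r3 by simp
    qed
    then show ?thesis using True by simp
  next
    case False
    then obtain x where x: "x \<in> C" "x \<noteq> u" using uC by auto
    obtain g0 where g0: "g0 \<in> F" "g0 \<subseteq> C" "u \<in> g0" using reach_edge[OF less.prems(3)[rule_format, OF x(1)] x(2)] by auto
    obtain vs es where P: "cpath C u vs es" "length es = m" using greedy[OF less.prems(2) g0(1,3,2)] by auto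
    let ?S = "set vs"
    have w: "wpath vs es" and h: "hd vs = u" and dv: "distinct vs" using cpath_parts[OF P(1)] by auto
    have SC: "?S \<subseteq> C" using cpath_verts[OF P(1) uC] .
    have cS: "card ?S = Suc m" using distinct_card[OF dv] wpath_len[OF w] P(2) by simp
    have uS: "u \<in> ?S" using h wpath_ne[OF w] by auto
    have ex: "\<forall>g\<in>F. g \<inter> (?S - {u}) \<noteq> {} \<longrightarrow> g \<subseteq> ?S"
    proof (intro ballI impI)
      fix g assume g: "g \<in> F" "g \<inter> (?S - {u}) \<noteq> {}"
      then obtain y where y: "y \<in> g" "y \<in> ?S" "y \<noteq> u" by auto
      show "g \<subseteq> ?S" by (rule exits[OF less.prems(1,2) P g(1) y(1) y(2) y(3)])
    qed
    define W where "W = C - (?S - {u})"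
    have finW: "finite W" using finC W_def by simp
    have uW: "u \<in> W" using uC W_def by simp
    have cSu: "card (?S - {u}) = m" using cS uS by simp
    have Ssub: "?S - {u} \<subseteq> C" using SC by auto
    have cW: "card W = card C - m" unfolding W_def using card_Diff_subset[OF _ Ssub] cSu by simp
    have cC: "Suc m \<le> card C" using card_mono[OF finC SC] cS by simp
    have ltW: "card W < card C" using cW cC mr by simp
    have gsW: "good_set W u"
      unfolding good_set_def
    proof (intro conjI ballI impI)
      show "finite W" by (rule finW)
      show "u \<in> W" by (rule uW)
    next
      fix e assume e: "e \<in> F" "e \<inter> (W - {u}) \<noteq> {}"
      then have "e \<inter> (C - {u}) \<noteq> {}" unfolding W_def by auto
      then have eC: "e \<subseteq> C" using less.prems(2) e(1) unfolding good_set_def by auto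
      have "e \<inter> (?S - {u}) = {}"
      proof (rule ccontr)
        assume "e \<inter> (?S - {u}) \<noteq> {}"
        then have "e \<subseteq> ?S" using ex e(1) by auto
        then show False using e(2) unfolding W_def by auto
      qed
      then show "e \<subseteq> W" using eC unfolding W_def by auto
    next
      fix y assume "y \<in> W - {u}"
      then have "y \<in> C - {u}" unfolding W_def by auto
      then show "dd \<le> deg y" using less.prems(2) unfolding good_set_def by auto
    qed
    have rW: "\<forall>y\<in>W. (adjC W)\<^sup>*\<^sup>* u y"
    proof
      fix y assume y: "y \<in> W"
      then have "y \<in> C" unfolding W_def by auto
      then show "(adjC W)\<^sup>*\<^sup>* u y"
        using reach_restrict[OF less.prems(3)[rule_format] y ex W_def] by simp
    qed
    have IH: "m * card {e\<in>F. e \<subseteq> W} \<le> (card W - 1) * (Suc m choose r)"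
      using less.hyps[OF ltW less.prems(1) gsW rW] by simp
    have sub: "{e\<in>F. e \<subseteq> C} \<subseteq> {e\<in>F. e \<subseteq> W} \<union> {T. T \<subseteq> ?S \<and> card T = r}"
    proof
      fix e assume e: "e \<in> {e\<in>F. e \<subseteq> C}"
      show "e \<in> {e\<in>F. e \<subseteq> W} \<union> {T. T \<subseteq> ?S \<and> card T = r}"
      proof (cases "e \<inter> (?S - {u}) = {}")
        case True then show ?thesis using e unfolding W_def by auto
      next
        case False
        have "e \<subseteq> ?S" using ex e False by auto
        moreover have "card e = r" using cardF e by auto
        ultimately show ?thesis by auto
      qed
    qed
    have "card {e\<in>F. e \<subseteq> C} \<le> card ({e\<in>F. e \<subseteq> W} \<union> {T. T \<subseteq> ?S \<and> card T = r})"
      by (rule card_mono[OF _ sub]) (simp add: finF)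
    also have "\<dots> \<le> card {e\<in>F. e \<subseteq> W} + card {T. T \<subseteq> ?S \<and> card T = r}" by (rule card_Un_le)
    also have "card {T. T \<subseteq> ?S \<and> card T = r} = Suc m choose r" using n_subsets[of ?S r] cS by simp
    finally have eC: "card {e\<in>F. e \<subseteq> C} \<le> card {e\<in>F. e \<subseteq> W} + (Suc m choose r)" .
    have "m * card {e\<in>F. e \<subseteq> C} \<le> m * card {e\<in>F. e \<subseteq> W} + m * (Suc m choose r)"
      using mult_le_mono2[OF eC, of m] by (simp add: add_mult_distrib2)
    also have "\<dots> \<le> (card W - 1) * (Suc m choose r) + m * (Suc m choose r)" using IH by simp
    also have "\<dots> = (card W - 1 + m) * (Suc m choose r)" by (simp add: add_mult_distrib)
    also have "card W - 1 + m = card C - 1" using cW cC by simp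
    finally show ?thesis using cC by simp
  qed
qed

end

context hg begin

abbreviation reach :: "'a \<Rightarrow> 'a \<Rightarrow> bool" where "reach \<equiv> (adjC UNIV)\<^sup>*\<^sup>*"

definition closed :: "'a set \<Rightarrow> bool" where
  "closed X \<longleftrightarrow> (\<forall>e\<in>F. e \<inter> X \<noteq> {} \<longrightarrow> e \<subseteq> X)"

lemma reach_sym: "reach x y \<Longrightarrow> reach y x"
proof -
  have "symp (adjC UNIV)" unfolding symp_def adjC_def by blast
  then have "symp reach" by (rule symp_rtranclp)
  then show "reach x y \<Longrightarrow> reach y x" by (meson sympD)
qed

lemma reach_trans: "reach x y \<Longrightarrow> reach y z \<Longrightarrow> reach x z" by (rule rtranclp_trans)

lemma reach_closed: "reach x y \<Longrightarrow> closed X \<Longrightarrow> x \<in> X \<Longrightarrow> y \<in> X"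
proof (induction rule: rtranclp_induct)
  case (step y z)
  then obtain e where "e \<in> F" "y \<in> e" "z \<in> e" unfolding adjC_def by auto
  then show ?case using step unfolding closed_def by blast
qed simp

lemma comp_closed: "closed {y. reach u y}"
  unfolding closed_def
proof (intro ballI impI subsetI)
  fix e z assume e: "e \<in> F" "e \<inter> {y. reach u y} \<noteq> {}" "z \<in> e"
  then obtain y where y: "y \<in> e" "reach u y" by auto
  have "adjC UNIV y z" unfolding adjC_def using e y by auto
  then show "z \<in> {y. reach u y}" using y by auto
qed

lemma reach_in_comp:
  assumes "reach u x"
  shows "(adjC {y. reach u y})\<^sup>*\<^sup>* u x"
  using assms
proof (induction rule: rtranclp_induct)
  case (step y z)
  then obtain e where e: "e \<in> F" "y \<in> e" "z \<in> e" unfolding adjC_def by auto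
  have "e \<subseteq> {y. reach u y}" using comp_closed e step unfolding closed_def by blast
  then have "adjC {y. reach u y} y z" unfolding adjC_def using e by auto
  then show ?case using step by (meson rtranclp.rtrancl_into_rtrancl)
qed simp

lemma edges_nonempty: "e \<in> F \<Longrightarrow> e \<noteq> {}"
  using cardF[of e] r3 by auto

lemma has_nbr:
  assumes "0 < deg y"
  shows "\<exists>z. z \<noteq> y \<and> reach y z"
proof -
  have "{e\<in>F. y \<in> e} \<noteq> {}" using assms unfolding deg_def by (auto simp: card_gt_0_iff)
  then obtain e where e: "e \<in> F" "y \<in> e" by auto
  have "card e = r" "finite e" using cardF[OF e(1)] by auto
  have "\<not> e \<subseteq> {y}"
  proof
    assume "e \<subseteq> {y}"
    then have "card e \<le> 1" using card_mono[of "{y}" e] by simp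
    then show False using \<open>card e = r\<close> r3 by simp
  qed
  then obtain z where z: "z \<in> e" "z \<noteq> y" by auto
  have "adjC UNIV y z" unfolding adjC_def using e z by auto
  then show ?thesis using z by auto
qed

lemma multi:
  assumes finV: "finite Vp" and EV: "\<forall>e\<in>F. e \<subseteq> Vp" and degV: "\<forall>x\<in>Vp. dd \<le> deg x"
  shows "X \<subseteq> Vp \<Longrightarrow> closed X \<Longrightarrow> X \<noteq> {} \<Longrightarrow> \<forall>x\<in>X. \<exists>y. reach x y \<and> bad y \<Longrightarrow>
    m * card {e\<in>F. e \<subseteq> X} + (Suc m choose r) \<le> card X * (Suc m choose r) \<and> Suc m \<le> card X"
proof (induction "card X" arbitrary: X rule: less_induct)
  case less
  let ?Cb = "Suc m choose r"
  have finX: "finite X" using less.prems(1) finV finite_subset by blast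
  obtain x where x: "x \<in> X" using less.prems(3) by auto
  obtain y where y: "reach x y" "bad y" using less.prems(4) x by auto
  have yX: "y \<in> X" using reach_closed[OF y(1) less.prems(2) x] .
  define K where "K = {z. reach y z}"
  have KX: "K \<subseteq> X" unfolding K_def using reach_closed less.prems(2) yX by blast
  have finK: "finite K" using finite_subset[OF KX finX] .
  have yK: "y \<in> K" unfolding K_def by simp
  have gsK: "good_set K y" unfolding good_set_def
  proof (intro conjI ballI impI)
    show "finite K" by (rule finK)
    show "y \<in> K" by (rule yK)
  next
    fix e assume "e \<in> F" "e \<inter> (K - {y}) \<noteq> {}"
    then show "e \<subseteq> K" using comp_closed unfolding closed_def K_def by blast
  next
    fix z assume "z \<in> K - {y}"
    then show "dd \<le> deg z" using degV KX less.prems(1) by auto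
  qed
  have rK: "\<forall>z\<in>K. (adjC K)\<^sup>*\<^sup>* y z" unfolding K_def using reach_in_comp by blast
  have fl: "m * card {e\<in>F. e \<subseteq> K} \<le> (card K - 1) * ?Cb" "K \<noteq> {y} \<longrightarrow> Suc m \<le> card K"
    using flower[OF y(2) gsK rK] by auto
  have "0 < deg y" using degV yX less.prems(1) dd_pos by force
  then obtain z where "z \<noteq> y" "reach y z" using has_nbr by blast
  then have "K \<noteq> {y}" unfolding K_def by auto
  then have cK: "Suc m \<le> card K" using fl(2) by simp
  define Y where "Y = X - K"
  have finY: "finite Y" using finX Y_def by simp
  have clY: "closed Y" unfolding closed_def
  proof (intro ballI impI)
    fix e assume e: "e \<in> F" "e \<inter> Y \<noteq> {}"
    then have "e \<subseteq> X" using less.prems(2) unfolding closed_def Y_def by blast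
    moreover have "e \<inter> K = {}" using comp_closed e unfolding closed_def K_def Y_def by blast
    ultimately show "e \<subseteq> Y" unfolding Y_def by auto
  qed
  have split: "{e\<in>F. e \<subseteq> X} = {e\<in>F. e \<subseteq> K} \<union> {e\<in>F. e \<subseteq> Y}"
  proof
    show "{e\<in>F. e \<subseteq> X} \<subseteq> {e\<in>F. e \<subseteq> K} \<union> {e\<in>F. e \<subseteq> Y}"
    proof
      fix e assume e: "e \<in> {e\<in>F. e \<subseteq> X}"
      show "e \<in> {e\<in>F. e \<subseteq> K} \<union> {e\<in>F. e \<subseteq> Y}"
      proof (cases "e \<inter> K = {}")
        case True then show ?thesis using e unfolding Y_def by auto
      next
        case False then have "e \<subseteq> K" using comp_closed e unfolding closed_def K_def by blast
        then show ?thesis using e by auto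
      qed
    qed
  next
    show "{e\<in>F. e \<subseteq> K} \<union> {e\<in>F. e \<subseteq> Y} \<subseteq> {e\<in>F. e \<subseteq> X}" using KX unfolding Y_def by auto
  qed
  have disj: "{e\<in>F. e \<subseteq> K} \<inter> {e\<in>F. e \<subseteq> Y} = {}" using edges_nonempty unfolding Y_def by blast
  have eX: "card {e\<in>F. e \<subseteq> X} = card {e\<in>F. e \<subseteq> K} + card {e\<in>F. e \<subseteq> Y}"
    unfolding split by (rule card_Un_disjoint) (use finF disj in auto)
  have cX: "card X = card K + card Y" unfolding Y_def using card_Diff_subset[OF finK KX] card_mono[OF finX KX] by simp
  show ?case
  proof (cases "Y = {}")
    case True
    then have "{e\<in>F. e \<subseteq> Y} = {}" using edges_nonempty by auto
    then have "card {e\<in>F. e \<subseteq> Y} = 0" by (simp only: card.empty)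
    then have "card {e\<in>F. e \<subseteq> X} = card {e\<in>F. e \<subseteq> K}" using eX by linarith
    then have "m * card {e\<in>F. e \<subseteq> X} + ?Cb \<le> (card K - 1) * ?Cb + ?Cb" using fl(1) by simp
    also have "(card K - 1) * ?Cb + ?Cb = card K * ?Cb"
    proof -
      have "card K = Suc (card K - 1)" using cK by simp
      then show ?thesis by (metis mult_Suc add.commute)
    qed
    finally have "m * card {e\<in>F. e \<subseteq> X} + ?Cb \<le> card K * ?Cb" .
    then show ?thesis using cX True cK by simp
  next
    case False
    have ltY: "card Y < card X" using cX cK by simp
    have YV: "Y \<subseteq> Vp" using KX less.prems(1) Y_def by auto
    have hY: "\<forall>x\<in>Y. \<exists>y. reach x y \<and> bad y" using less.prems(4) Y_def by auto
    have IH: "m * card {e\<in>F. e \<subseteq> Y} + ?Cb \<le> card Y * ?Cb"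
      using less.hyps[OF ltY YV clY False hY] by simp
    have "m * card {e\<in>F. e \<subseteq> X} + ?Cb \<le> (card K - 1) * ?Cb + card Y * ?Cb"
      using eX fl(1) IH by (simp add: algebra_simps)
    also have "\<dots> \<le> card X * ?Cb" using cX by (simp add: algebra_simps)
    finally show ?thesis using cX cK by simp
  qed
qed

end

context hg begin

lemma split_closed:
  assumes "closed K" "K \<subseteq> X" "closed X" "finite X"
  shows "card {e\<in>F. e \<subseteq> X} = card {e\<in>F. e \<subseteq> K} + card {e\<in>F. e \<subseteq> X - K}"
    "closed (X - K)"
proof -
  have split: "{e\<in>F. e \<subseteq> X} = {e\<in>F. e \<subseteq> K} \<union> {e\<in>F. e \<subseteq> X - K}"
  proof
    show "{e\<in>F. e \<subseteq> X} \<subseteq> {e\<in>F. e \<subseteq> K} \<union> {e\<in>F. e \<subseteq> X - K}"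
    proof
      fix e assume e: "e \<in> {e\<in>F. e \<subseteq> X}"
      show "e \<in> {e\<in>F. e \<subseteq> K} \<union> {e\<in>F. e \<subseteq> X - K}"
      proof (cases "e \<inter> K = {}")
        case True then show ?thesis using e by auto
      next
        case False then have "e \<subseteq> K" using assms(1) e unfolding closed_def by blast
        then show ?thesis using e by auto
      qed
    qed
  next
    show "{e\<in>F. e \<subseteq> K} \<union> {e\<in>F. e \<subseteq> X - K} \<subseteq> {e\<in>F. e \<subseteq> X}" using assms(2) by auto
  qed
  have disj: "{e\<in>F. e \<subseteq> K} \<inter> {e\<in>F. e \<subseteq> X - K} = {}" using edges_nonempty by blast
  show "card {e\<in>F. e \<subseteq> X} = card {e\<in>F. e \<subseteq> K} + card {e\<in>F. e \<subseteq> X - K}"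
    unfolding split by (rule card_Un_disjoint) (use finF disj in auto)
  show "closed (X - K)" unfolding closed_def
  proof (intro ballI impI)
    fix e assume e: "e \<in> F" "e \<inter> (X - K) \<noteq> {}"
    then have "e \<subseteq> X" using assms(3) unfolding closed_def by blast
    moreover have "e \<inter> K = {}" using assms(1) e unfolding closed_def by blast
    ultimately show "e \<subseteq> X - K" by auto
  qed
qed

lemma arith_final:
  fixes E n Cb :: nat
  assumes "m * E + 2 * Cb \<le> n * Cb" "r * Cb = Suc m * dd" "int E \<ge> int dd * (int n - int m)"
    "2 * m + 2 \<le> n"
  shows False
proof -
  have d0: "0 < dd" by (rule dd_pos)
  have "r * (m * E + 2 * Cb) \<le> r * (n * Cb)" using assms(1) by simp
  moreover have "r * (m * E + 2 * Cb) = r * m * E + 2 * (r * Cb)" by (simp add: algebra_simps)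
  moreover have "r * (n * Cb) = n * (r * Cb)" by (simp add: algebra_simps)
  ultimately have A: "r * m * E + 2 * (Suc m * dd) \<le> n * (Suc m * dd)" using assms(2) by simp
  have A': "int r * int m * int E + 2 * (int m + 1) * int dd \<le> int n * (int m + 1) * int dd"
  proof -
    have "int (r * m * E + 2 * (Suc m * dd)) \<le> int (n * (Suc m * dd))" using A by (simp only: of_nat_le_iff)
    then show ?thesis by (simp add: algebra_simps)
  qed
  have nm: "int n - int m \<ge> 0" using assms(4) by simp
  have "int r * int m * (int dd * (int n - int m)) \<le> int r * int m * int E"
    using assms(3) by (intro mult_left_mono) auto
  moreover have "3 * int m * (int dd * (int n - int m)) \<le> int r * int m * (int dd * (int n - int m))"
    using r3 nm by (intro mult_right_mono) auto
  ultimately have B: "int dd * (3 * int m * (int n - int m) + 2 * (int m + 1)) \<le> int dd * (int n * (int m + 1))"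
    using A' by (simp add: algebra_simps)
  have C: "3 * int m * (int n - int m) + 2 * (int m + 1) \<le> int n * (int m + 1)"
    using B d0 by (simp add: mult_le_cancel_left_pos)
  have n2: "int n \<ge> 2 * int m + 2" using assms(4) by simp
  have D: "int n * (2 * int m - 1) \<ge> (2 * int m + 2) * (2 * int m - 1)"
    using n2 mr by (intro mult_right_mono) auto
  have C': "2 * (int n * int m) - int n + 2 * int m + 2 \<le> 3 * (int m * int m)" using C by (simp add: algebra_simps)
  have D': "2 * (int n * int m) - int n \<ge> 4 * (int m * int m) + 2 * int m - 2" using D by (simp add: algebra_simps)
  have "int m * int m \<ge> 0" by simp
  then show False using C' D' mr by linarith
qed

end

context hg begin

lemma all_bad_contra:
  assumes finV: "finite Vp" and EV: "\<forall>e\<in>F. e \<subseteq> Vp" and degV: "\<forall>x\<in>Vp. dd \<le> deg x"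
    and allbad: "\<forall>x\<in>Vp. \<exists>y. reach x y \<and> bad y"
    and u0: "u0 \<in> Vp" and w0: "w0 \<in> Vp" "\<not> reach u0 w0"
    and cnt: "int (card F) \<ge> int dd * (int (card Vp) - int m)"
  shows False
proof -
  let ?Cb = "Suc m choose r"
  have clV: "closed Vp" unfolding closed_def using EV by auto
  define K where "K = {y. reach u0 y}"
  have clK: "closed K" unfolding K_def by (rule comp_closed)
  have KV: "K \<subseteq> Vp" unfolding K_def using reach_closed[OF _ clV u0] by auto
  have sp: "card {e\<in>F. e \<subseteq> Vp} = card {e\<in>F. e \<subseteq> K} + card {e\<in>F. e \<subseteq> Vp - K}" "closed (Vp - K)"
    using split_closed[OF clK KV clV finV] by auto
  have m1: "m * card {e\<in>F. e \<subseteq> K} + ?Cb \<le> card K * ?Cb \<and> Suc m \<le> card K"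
    by (rule multi[OF finV EV degV KV clK]) (use allbad KV K_def in auto)
  have m2: "m * card {e\<in>F. e \<subseteq> Vp - K} + ?Cb \<le> card (Vp - K) * ?Cb \<and> Suc m \<le> card (Vp - K)"
    by (rule multi[OF finV EV degV _ sp(2)]) (use allbad w0 K_def in auto)
  have cF: "card F = card {e\<in>F. e \<subseteq> Vp}" using EV by (metis (no_types, lifting) Collect_mem_eq Collect_cong)
  have finK: "finite K" using finite_subset[OF KV finV] .
  have cV: "card Vp = card K + card (Vp - K)" using card_Diff_subset[OF finK KV] card_mono[OF finV KV] by simp
  have rC: "r * ?Cb = Suc m * dd"
  proof -
    have "Suc m * (m choose (r - 1)) = (Suc m choose Suc (r - 1)) * Suc (r - 1)" by (rule Suc_times_binomial_eq)
    moreover have "Suc (r - 1) = r" using r3 by simp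
    ultimately show ?thesis unfolding dd_def by (simp add: mult.commute)
  qed
  have A: "m * card F + 2 * ?Cb \<le> card Vp * ?Cb"
    using m1 m2 sp(1) cF cV by (simp add: algebra_simps)
  have B: "2 * m + 2 \<le> card Vp" using m1 m2 cV by simp
  show False by (rule arith_final[OF A rC cnt B])
qed

lemma upath_reach:
  assumes "wpath vs es" "set es \<subseteq> F"
  shows "\<forall>y\<in>set vs. reach (hd vs) y"
  using assms
proof (induction vs es rule: wpath.induct)
  case (2 v w vs e es)
  have IH: "\<forall>y\<in>set (w # vs). reach w y" using 2 by auto
  have "adjC UNIV v w" unfolding adjC_def using 2 by auto
  then show ?case using IH by (auto intro: converse_rtranclp_into_rtranclp)
qed auto

lemma chain_of_reach:
  assumes "reach u w"
  shows "u = w \<or> (\<exists>es. es \<noteq> [] \<and> set es \<subseteq> F \<and> u \<in> hd es \<and> w \<in> last es \<and>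
              (\<forall>i. Suc i < length es \<longrightarrow> es ! i \<inter> es ! Suc i \<noteq> {}))"
  using assms
proof (induction rule: rtranclp_induct)
  case base then show ?case by simp
next
  case (step y z)
  obtain e where e: "e \<in> F" "y \<in> e" "z \<in> e" using step(2) unfolding adjC_def by auto
  show ?case
  proof (cases "u = y")
    case True
    then have "[e] \<noteq> [] \<and> set [e] \<subseteq> F \<and> u \<in> hd [e] \<and> z \<in> last [e] \<and>
              (\<forall>i. Suc i < length [e] \<longrightarrow> [e] ! i \<inter> [e] ! Suc i \<noteq> {})" using e by simp
    then show ?thesis by blast
  next
    case False
    then obtain es where es: "es \<noteq> []" "set es \<subseteq> F" "u \<in> hd es" "y \<in> last es"
      "\<forall>i. Suc i < length es \<longrightarrow> es ! i \<inter> es ! Suc i \<noteq> {}" using step(3) by blast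
    have ch: "\<forall>i. Suc i < length (es @ [e]) \<longrightarrow> (es @ [e]) ! i \<inter> (es @ [e]) ! Suc i \<noteq> {}"
    proof (intro allI impI)
      fix i assume i: "Suc i < length (es @ [e])"
      show "(es @ [e]) ! i \<inter> (es @ [e]) ! Suc i \<noteq> {}"
      proof (cases "Suc i < length es")
        case True then show ?thesis using es(5) by (simp add: nth_append)
      next
        case False
        then have si: "Suc i = length es" using i by simp
        then have ii: "i = length es - 1" by simp
        have "(es @ [e]) ! i = last es" using es(1) ii by (simp add: nth_append last_conv_nth)
        moreover have "(es @ [e]) ! Suc i = e" using si by (simp add: nth_append)
        ultimately have "(es @ [e]) ! i = last es" "(es @ [e]) ! Suc i = e" by auto
        then show ?thesis using es(4) e(2) by auto
      qed
    qed
    have "es @ [e] \<noteq> [] \<and> set (es @ [e]) \<subseteq> F \<and> u \<in> hd (es @ [e]) \<and> z \<in> last (es @ [e])"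
      using es e by auto
    then show ?thesis using ch by blast
  qed
qed

lemma hconn_of_reach:
  assumes "\<forall>u\<in>Vp. \<forall>w\<in>Vp. reach u w"
  shows "hconnected Vp F"
  unfolding hconnected_def using chain_of_reach assms by blast

end

lemma walk_of_rtranclp:
  assumes "(\<lambda>x y. \<exists>e\<in>E. x \<in> e \<and> y \<in> e)\<^sup>*\<^sup>* a b"
  shows "\<exists>vs es. wpath vs es \<and> set es \<subseteq> E \<and> hd vs = a \<and> last vs = b"
  using assms
proof (induction rule: rtranclp_induct)
  case base
  have "wpath [a] [] \<and> set [] \<subseteq> E \<and> hd [a] = a \<and> last [a] = a" by simp
  then show ?case by blast
next
  case (step y z)
  obtain vs es where W: "wpath vs es" "set es \<subseteq> E" "hd vs = a" "last vs = y" using step(3) by blast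
  obtain e where e: "e \<in> E" "y \<in> e" "z \<in> e" using step(2) by auto
  have "wpath (vs @ [z]) (es @ [e])" using wpath_snoc[OF W(1)] W(4) e by simp
  moreover have "hd (vs @ [z]) = a" using W(3) wpath_ne[OF W(1)] by simp
  ultimately show ?case using W(2) e by (metis last_snoc set_append Un_subset_iff empty_set list.set(2) insert_subset empty_subsetI)
qed

lemma rtranclp_of_chain:
  "es \<noteq> [] \<Longrightarrow> set es \<subseteq> E \<Longrightarrow> a \<in> hd es \<Longrightarrow> b \<in> last es \<Longrightarrow>
   (\<forall>i. Suc i < length es \<longrightarrow> es ! i \<inter> es ! Suc i \<noteq> {}) \<Longrightarrow>
   (\<lambda>x y. \<exists>e\<in>E. x \<in> e \<and> y \<in> e)\<^sup>*\<^sup>* a b"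
proof (induction es arbitrary: a)
  case Nil then show ?case by simp
next
  case (Cons e rest)
  show ?case
  proof (cases rest)
    case Nil
    then show ?thesis using Cons.prems by (auto intro: r_into_rtranclp)
  next
    case (Cons e' rest')
    have "e \<inter> e' \<noteq> {}" using Cons.prems(5)[rule_format, of 0] \<open>rest = e' # rest'\<close> by simp
    then obtain y where y: "y \<in> e" "y \<in> e'" by auto
    have st: "(\<lambda>x y. \<exists>e\<in>E. x \<in> e \<and> y \<in> e) a y" using Cons.prems y by auto
    have "(\<lambda>x y. \<exists>e\<in>E. x \<in> e \<and> y \<in> e)\<^sup>*\<^sup>* y b"
    proof (rule Cons.IH)
      show "rest \<noteq> []" "set rest \<subseteq> E" using Cons.prems \<open>rest = e' # rest'\<close> by auto
      show "y \<in> hd rest" using y \<open>rest = e' # rest'\<close> by simp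
      show "b \<in> last rest" using Cons.prems \<open>rest = e' # rest'\<close> by simp
      show "\<forall>i. Suc i < length rest \<longrightarrow> rest ! i \<inter> rest ! Suc i \<noteq> {}"
        using Cons.prems(5) by (metis Suc_less_eq length_Cons nth_Cons_Suc)
    qed
    with st show ?thesis by (rule converse_rtranclp_into_rtranclp)
  qed
qed

lemma last_glue: "ys \<noteq> [] \<Longrightarrow> xs \<noteq> [] \<Longrightarrow> last xs = hd ys \<Longrightarrow> last (xs @ tl ys) = last ys"
  by (cases ys) auto

lemma min_bridge:
  fixes E :: "'a set set"
  assumes ex: "\<exists>vs es. wpath vs es \<and> set es \<subseteq> E \<and> hd vs \<in> K \<and> last vs \<in> Vp - K"
    and KV: "K \<subseteq> Vp"
  shows "\<exists>vs es. wpath vs es \<and> set es \<subseteq> E \<and> hd vs \<in> K \<and> last vs \<in> Vp - K \<and> distinct vs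
     \<and> distinct es \<and> 1 \<le> length es \<and> (\<forall>j. 0 < j \<and> j < length es \<longrightarrow> vs ! j \<notin> Vp)"
proof -
  define Q where "Q vs es \<longleftrightarrow> wpath vs es \<and> set es \<subseteq> E \<and> hd vs \<in> K \<and> last vs \<in> Vp - K" for vs es
  have "\<exists>n vs es. Q vs es \<and> length es = n" using ex unfolding Q_def by blast
  define n0 where "n0 = (LEAST n. \<exists>vs es. Q vs es \<and> length es = n)"
  obtain vs es where Qv: "Q vs es" "length es = n0"
    using LeastI_ex[OF \<open>\<exists>n vs es. Q vs es \<and> length es = n\<close>] unfolding n0_def by blast
  have minl: "\<And>vs' es'. Q vs' es' \<Longrightarrow> length es \<le> length es'"
    using Qv(2) unfolding n0_def by (metis (mono_tags) Least_le)
  have w: "wpath vs es" and sE: "set es \<subseteq> E" and hK: "hd vs \<in> K" and lV: "last vs \<in> Vp - K"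
    using Qv(1) unfolding Q_def by auto
  have L: "length vs = Suc (length es)" using wpath_len[OF w] .
  have vne: "vs \<noteq> []" using L by auto
  have l1: "1 \<le> length es"
  proof (rule ccontr)
    assume "\<not> 1 \<le> length es"
    then have "length vs = 1" using L by (simp add: not_le)
    then have "hd vs = last vs" by (cases vs) auto
    then show False using hK lV by auto
  qed
  have inter: "\<forall>j. 0 < j \<and> j < length es \<longrightarrow> vs ! j \<notin> Vp"
  proof (intro allI impI)
    fix j assume j: "0 < j \<and> j < length es"
    show "vs ! j \<notin> Vp"
    proof
      assume jV: "vs ! j \<in> Vp"
      show False
      proof (cases "vs ! j \<in> K")
        case True
        have "Q (drop j vs) (drop j es)" unfolding Q_def
          using wpath_drop[OF w, of j] j sE True lV L
          by (auto simp: hd_drop_conv_nth dest: in_set_dropD)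
        then show False using minl j by fastforce
      next
        case False
        have "take (Suc j) vs = take j vs @ [vs ! j]" using L j by (simp add: take_Suc_conv_app_nth)
        then have lt: "last (take (Suc j) vs) = vs ! j" by simp
        have "Q (take (Suc j) vs) (take j es)" unfolding Q_def
          using wpath_take[OF w, of j] j sE False jV hK lt vne
          by (auto dest: in_set_takeD)
        then show False using minl j by fastforce
      qed
    qed
  qed
  have dv: "distinct vs"
    unfolding distinct_conv_nth
  proof (intro allI impI)
    fix a b assume ab: "a < length vs" "b < length vs" "a \<noteq> b"
    show "vs ! a \<noteq> vs ! b"
    proof
      assume eq: "vs ! a = vs ! b"
      {
        fix a b assume ab: "a < b" "b < length vs" "vs ! a = vs ! b"
        define vs' where "vs' = take (Suc a) vs @ tl (drop b vs)"
        define es' where "es' = take a es @ drop b es"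
        have w1: "wpath (take (Suc a) vs) (take a es)" using wpath_take[OF w, of a] ab L by simp
        have w2: "wpath (drop b vs) (drop b es)" using wpath_drop[OF w, of b] ab L by simp
        have "take (Suc a) vs = take a vs @ [vs ! a]" using ab L by (simp add: take_Suc_conv_app_nth)
        then have lt: "last (take (Suc a) vs) = hd (drop b vs)"
          using ab L by (simp add: hd_drop_conv_nth)
        have w': "wpath vs' es'" unfolding vs'_def es'_def by (rule wpath_glue[OF w1 w2 lt])
        have "last vs' = last (drop b vs)" unfolding vs'_def
          by (rule last_glue) (use ab vne lt in auto)
        then have lv': "last vs' = last vs" using ab by simp
        have hv': "hd vs' = hd vs" unfolding vs'_def using vne by (cases vs) auto
        have "Q vs' es'" unfolding Q_def using w' lv' hv' hK lV sE
          unfolding es'_def by (auto dest: in_set_takeD in_set_dropD)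
        then have False using minl ab L unfolding es'_def by fastforce
      }
      then show False using ab eq by (metis linorder_neqE_nat)
    qed
  qed
  have de: "distinct es"
    unfolding distinct_conv_nth
  proof (intro allI impI)
    fix a b assume ab: "a < length es" "b < length es" "a \<noteq> b"
    show "es ! a \<noteq> es ! b"
    proof
      assume eq: "es ! a = es ! b"
      {
        fix a b assume ab: "a < b" "b < length es" "es ! a = es ! b"
        have tk: "take (Suc a) vs = take a vs @ [vs ! a]" using ab L by (simp add: take_Suc_conv_app_nth)
        have dr: "drop (Suc b) vs = vs ! Suc b # drop (Suc (Suc b)) vs" using ab L by (simp add: Cons_nth_drop_Suc)
        have w1: "wpath (take a vs @ [vs ! a]) (take a es)" using wpath_take[OF w, of a] ab tk by simp
        have w2: "wpath (vs ! Suc b # drop (Suc (Suc b)) vs) (drop (Suc b) es)"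
          using wpath_drop[OF w, of "Suc b"] ab dr by simp
        have ed: "{vs ! a, vs ! Suc b} \<subseteq> es ! a"
          using wpath_edge[OF w, of a] wpath_edge[OF w, of b] ab by auto
        define vs' where "vs' = take a vs @ vs ! a # vs ! Suc b # drop (Suc (Suc b)) vs"
        define es' where "es' = take a es @ es ! a # drop (Suc b) es"
        have w': "wpath vs' es'" unfolding vs'_def es'_def by (rule wpath_join[OF w1 ed w2])
        have lv': "last vs' = last vs" unfolding vs'_def using dr[symmetric] ab L by simp
        have hv': "hd vs' = hd vs" unfolding vs'_def using vne by (cases a; cases vs) auto
        have "es ! a \<in> set es" using ab by simp
        then have "Q vs' es'" unfolding Q_def using w' lv' hv' hK lV sE
          unfolding es'_def by (auto dest: in_set_takeD in_set_dropD)
        then have False using minl ab L unfolding es'_def by fastforce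
      }
      then show False using ab eq by (metis linorder_neqE_nat)
    qed
  qed
  show ?thesis using w sE hK lV dv de l1 inter by blast
qed

context hg begin

lemma good_comp_contra:
  assumes finV: "finite Vp" and EV: "\<forall>e\<in>F. e \<subseteq> Vp" and degV: "\<forall>x\<in>Vp. dd \<le> deg x"
    and FE: "F \<subseteq> E"
    and conn: "\<forall>a\<in>Vp. \<forall>b\<in>Vp. (\<lambda>x y. \<exists>e\<in>E. x \<in> e \<and> y \<in> e)\<^sup>*\<^sup>* a b"
    and x: "x \<in> Vp" and good: "\<forall>y. reach x y \<longrightarrow> \<not> bad y"
    and z: "z \<in> Vp" "\<not> reach x z"
    and kb: "k \<le> 2 * m + 2"
  shows "has_berge_path E k"
proof -
  have clV: "closed Vp" unfolding closed_def using EV by auto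
  define K where "K = {y. reach x y}"
  have clK: "closed K" unfolding K_def by (rule comp_closed)
  have KV: "K \<subseteq> Vp" unfolding K_def using reach_closed[OF _ clV x] by auto
  have xK: "x \<in> K" unfolding K_def by simp
  have zK: "z \<notin> K" using z unfolding K_def by simp
  obtain vs0 es0 where W0: "wpath vs0 es0" "set es0 \<subseteq> E" "hd vs0 = x" "last vs0 = z"
    using walk_of_rtranclp[OF conn[rule_format, OF x z(1)]] by blast
  obtain vs es where B: "wpath vs es" "set es \<subseteq> E" "hd vs \<in> K" "last vs \<in> Vp - K" "distinct vs"
     "distinct es" "1 \<le> length es" "\<forall>j. 0 < j \<and> j < length es \<longrightarrow> vs ! j \<notin> Vp"
    using min_bridge[of E K Vp] W0 xK zK z(1) KV by blast
  define u where "u = hd vs"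
  define w where "w = last vs"
  have L: "length vs = Suc (length es)" using wpath_len[OF B(1)] .
  have vne: "vs \<noteq> []" using L by auto
  have lvn: "last vs = vs ! length es" using L vne by (simp add: last_conv_nth)
  have hvn: "hd vs = vs ! 0" using vne by (simp add: hd_conv_nth)
  have notF: "\<forall>e\<in>set es. e \<notin> F"
  proof
    fix e assume e: "e \<in> set es"
    then obtain j where j: "j < length es" "es ! j = e" by (auto simp: in_set_conv_nth)
    show "e \<notin> F"
    proof (cases "length es = 1")
      case True
      then have j0: "j = 0" using j by simp
      have "vs ! 0 \<in> e" "vs ! 1 \<in> e" using wpath_edge[OF B(1), of j] j j0 by auto
      moreover have "vs ! 0 \<in> K" using B(3) hvn by simp
      moreover have "vs ! 1 \<notin> K" using B(4) lvn True by simp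
      ultimately show ?thesis using clK unfolding closed_def by blast
    next
      case False
      define t where "t = (if j = 0 then 1 else j)"
      have t: "0 < t" "t < length es" using False j B(7) unfolding t_def by auto
      have "vs ! t \<in> e" using wpath_edge[OF B(1), of j] j unfolding t_def by (auto split: if_splits)
      moreover have "vs ! t \<notin> Vp" using B(8) t by blast
      ultimately show ?thesis using EV by blast
    qed
  qed
  have tlv: "\<forall>y\<in>set (tl vs). y \<notin> K \<and> (y \<notin> Vp \<or> y = w)"
  proof
    fix y assume "y \<in> set (tl vs)"
    then obtain i where i: "i < length (tl vs)" "tl vs ! i = y" by (auto simp: in_set_conv_nth)
    then have yi: "y = vs ! Suc i" "Suc i \<le> length es" using L by (auto simp: nth_tl)
    show "y \<notin> K \<and> (y \<notin> Vp \<or> y = w)"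
    proof (cases "Suc i = length es")
      case True
      then have "y = w" using yi lvn unfolding w_def by simp
      then show ?thesis using B(4) unfolding w_def by auto
    next
      case False
      then have "y \<notin> Vp" using B(8) yi by auto
      then show ?thesis using KV by auto
    qed
  qed
  have uK: "u \<in> K" using B(3) unfolding u_def .
  have wV: "w \<in> Vp" "w \<notin> K" using B(4) unfolding w_def by auto
  have "\<not> bad u" using good uK unfolding K_def by auto
  then obtain vs1 es1 where P1: "upath u vs1 es1" "length es1 = Suc m" unfolding bad_def by blast
  have w1: "wpath vs1 es1" and h1: "hd vs1 = u" and dv1: "distinct vs1" and de1: "distinct es1"
    and sF1: "set es1 \<subseteq> F" using P1 unfolding upath_def by auto
  have v1K: "set vs1 \<subseteq> K"
  proof
    fix y assume "y \<in> set vs1"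
    then have "reach u y" using upath_reach[OF w1 sF1] h1 by auto
    then show "y \<in> K" using uK unfolding K_def by (auto intro: rtranclp_trans)
  qed
  have e1K: "\<forall>e\<in>set es1. e \<subseteq> K"
  proof
    fix e assume "e \<in> set es1"
    then obtain j where j: "j < length es1" "es1 ! j = e" by (auto simp: in_set_conv_nth)
    have "vs1 ! j \<in> e" using wpath_edge[OF w1 j(1)] j by simp
    moreover have "vs1 ! j \<in> K" using v1K wpath_len[OF w1] j by auto
    moreover have "e \<in> F" using sF1 j by auto
    ultimately show "e \<subseteq> K" using clK unfolding closed_def by blast
  qed
  have gsV: "good_set Vp w" unfolding good_set_def using finV wV EV degV by auto
  have "0 < deg w" using degV wV dd_pos by force
  then obtain g0 where g0: "g0 \<in> F" "w \<in> g0" unfolding deg_def by (auto simp: card_gt_0_iff)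
  obtain vs2 es2 where P2: "cpath Vp w vs2 es2" "length es2 = m"
    using greedy[OF gsV g0(1,2)] EV g0 by blast
  have w2: "wpath vs2 es2" and h2: "hd vs2 = w" and dv2: "distinct vs2" and de2: "distinct es2"
    and sF2: "set es2 \<subseteq> F" using cpath_parts[OF P2(1)] by auto
  have v2: "\<forall>y\<in>set vs2. y \<notin> K \<and> y \<in> Vp"
  proof
    fix y assume y: "y \<in> set vs2"
    then have ry: "reach w y" using upath_reach[OF w2 sF2] h2 by auto
    have "y \<notin> K"
    proof
      assume "y \<in> K"
      then have "reach x y" unfolding K_def by simp
      then have "reach x w" using reach_sym[OF ry] by (rule rtranclp_trans)
      then show False using wV unfolding K_def by simp
    qed
    moreover have "y \<in> Vp" using reach_closed[OF ry clV wV(1)] .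
    ultimately show "y \<notin> K \<and> y \<in> Vp" by simp
  qed
  have e2n1: "\<forall>e\<in>set es2. e \<notin> set es1"
  proof
    fix e assume "e \<in> set es2"
    then obtain j where j: "j < length es2" "es2 ! j = e" by (auto simp: in_set_conv_nth)
    have "vs2 ! j \<in> e" using wpath_edge[OF w2 j(1)] j by simp
    moreover have "vs2 ! j \<notin> K" using v2 wpath_len[OF w2] j by auto
    ultimately show "e \<notin> set es1" using e1K by blast
  qed
  have wtl2: "w \<notin> set (tl vs2)" using dv2 h2 wpath_ne[OF w2] by (cases vs2) auto
  define A1 where "A1 = rev vs1 @ tl vs"
  define B1 where "B1 = rev es1 @ es"
  have lr1: "last (rev vs1) = hd vs" using h1 wpath_ne[OF w1] unfolding u_def by (simp add: last_rev)
  have wA1: "wpath A1 B1" unfolding A1_def B1_def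
    by (rule wpath_glue[OF wpath_rev[OF w1] B(1) lr1])
  have lA1: "last A1 = w" unfolding A1_def w_def
    by (rule last_glue) (use vne wpath_ne[OF w1] lr1 in auto)
  define A where "A = A1 @ tl vs2"
  define BB where "BB = B1 @ es2"
  have wA: "wpath A BB" unfolding A_def BB_def
    by (rule wpath_glue[OF wA1 w2]) (use lA1 h2 in simp)
  have dA1: "distinct A1" unfolding A1_def using dv1 B(5) v1K tlv by (auto simp: distinct_tl)
  have dA: "distinct A" unfolding A_def
  proof (subst distinct_append, intro conjI)
    show "distinct A1" by (rule dA1)
    show "distinct (tl vs2)" using dv2 by (simp add: distinct_tl)
    show "set A1 \<inter> set (tl vs2) = {}"
    proof (rule ccontr)
      assume "set A1 \<inter> set (tl vs2) \<noteq> {}"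
      then obtain y where y: "y \<in> set A1" "y \<in> set (tl vs2)" by auto
      have "y \<in> set vs2" using y(2) by (cases vs2) auto
      then have yy: "y \<notin> K" "y \<in> Vp" using v2 by auto
      have "y \<noteq> w" using y(2) wtl2 by auto
      then show False using y(1) yy v1K tlv unfolding A1_def by auto
    qed
  qed
  have dB: "distinct BB" unfolding BB_def B1_def using de1 B(6) de2 sF1 notF sF2 e2n1 by auto
  have sB: "set BB \<subseteq> E" unfolding BB_def B1_def using sF1 B(2) sF2 FE by auto
  have lB: "k \<le> length BB" unfolding BB_def B1_def using P1(2) P2(2) B(7) kb by simp
  show ?thesis by (rule berge_of_wpath[OF wA dA dB sB lB])
qed

end

lemma peel_inv:
  assumes "(peel_step d)\<^sup>*\<^sup>* (V, E) q" "finite V" "\<forall>e\<in>E. e \<subseteq> V"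
  shows "fst q \<subseteq> V \<and> snd q = {e\<in>E. e \<subseteq> fst q} \<and> card E \<le> card (snd q) + d * (card V - card (fst q))"
  using assms(1)
proof (induction rule: rtranclp_induct)
  case base then show ?case using assms(3) by auto
next
  case (step p q)
  have finE: "finite E" using assms(2,3) by (meson finite_Pow_iff finite_subset PowI subsetI)
  from step(2) show ?case
  proof cases
    case (1 v Vc Ec)
    have IH: "Vc \<subseteq> V" "Ec = {e\<in>E. e \<subseteq> Vc}" "card E \<le> card Ec + d * (card V - card Vc)"
      using step(3) 1 by auto
    have fEc: "finite Ec" using IH(2) finE by simp
    have e1: "{e\<in>Ec. v \<notin> e} = {e\<in>E. e \<subseteq> Vc - {v}}" using IH(2) by auto
    have "Ec = {e\<in>Ec. v \<notin> e} \<union> {e\<in>Ec. v \<in> e}" by auto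
    then have "card Ec = card {e\<in>Ec. v \<notin> e} + card {e\<in>Ec. v \<in> e}"
      by (metis (no_types, lifting) card_Un_disjoint disjoint_iff fEc finite_Un mem_Collect_eq)
    moreover have "card {e\<in>Ec. v \<in> e} < d" using 1 unfolding hdegree_def by simp
    moreover have "card (Vc - {v}) = card Vc - 1" using 1 by simp
    moreover have "card Vc \<le> card V" "1 \<le> card Vc" using card_mono[OF assms(2) IH(1)] 1 IH(1) assms(2)
      by (auto simp: Suc_le_eq card_gt_0_iff intro: finite_subset)
    ultimately have "card E \<le> card {e\<in>Ec. v \<notin> e} + d * (card V - card (Vc - {v}))"
      using IH(3) by (simp add: algebra_simps diff_mult_distrib2)
    then show ?thesis using 1 IH e1 by auto
  qed
qed

theorem claim2:
  fixes r k n :: nat and V :: "'a set" and E :: "'a set set"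
    and V' :: "'a set" and E' :: "'a set set"
  assumes "r \<ge> 3" and "k \<ge> 2 * r + 13"
  defines "m \<equiv> (k - 1) div 2"
  defines "f \<equiv> (\<lambda>n::nat. int (m choose (r - 1)) * (int n - int m) + int (m choose r)
                     + int (ind_even k) * int (m choose (r - 2)))"
  defines "N \<equiv> int ((r * (k - 1)) choose r) + int (m choose (r - 1)) * int m
               - int (m choose r) - int (ind_even k) * int (m choose (r - 2))
               + int (r * (k - 1))"
  assumes "int n > N"
    and "r_graph r V E" and "card V = n"
    and "hconnected V E"
    and "\<not> has_berge_path E k"
    and "int (card E) \<ge> f n"
    and "(peel_step (m choose (r - 1)))\<^sup>*\<^sup>* (V, E) (V', E')"
    and "\<not> (\<exists>H''. peel_step (m choose (r - 1)) (V', E') H'')"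
  shows "hconnected V' E'"
proof -
  let ?d = "m choose (r - 1)"
  have r3: "3 \<le> r" using assms(1) .
  have mr: "r + 6 \<le> m" unfolding m_def using assms(2) by simp
  have kb: "k \<le> 2 * m + 2" unfolding m_def by simp
  have finV: "finite V" and EV: "\<forall>e\<in>E. e \<subseteq> V \<and> card e = r" using assms(7) unfolding r_graph_def by auto
  have PI: "V' \<subseteq> V \<and> E' = {e\<in>E. e \<subseteq> V'} \<and> card E \<le> card E' + ?d * (card V - card V')"
    using peel_inv[OF assms(12) finV] EV by auto
  have V'V: "V' \<subseteq> V" and E'eq: "E' = {e\<in>E. e \<subseteq> V'}" and cE: "card E \<le> card E' + ?d * (card V - card V')"
    using PI by auto
  have finV': "finite V'" using finite_subset[OF V'V finV] .
  have finE': "finite E'" using E'eq finV' by (auto intro: finite_subset[of _ "Pow V'"])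
  have E'V': "\<forall>e\<in>E'. e \<subseteq> V'" using E'eq by auto
  have E'E: "E' \<subseteq> E" using E'eq by auto
  interpret H: hg E' r m
  proof
    fix e assume "e \<in> E'"
    then show "finite e \<and> card e = r" using E'E EV finV' E'V' by (meson finite_subset subsetD)
  qed (use r3 mr finE' in auto)
  have dd: "H.dd = ?d" unfolding H.dd_def ..
  have degV: "\<forall>x\<in>V'. H.dd \<le> H.deg x"
  proof
    fix x assume x: "x \<in> V'"
    show "H.dd \<le> H.deg x"
    proof (rule ccontr)
      assume "\<not> H.dd \<le> H.deg x"
      then have "hdegree E' x < ?d" unfolding dd H.deg_def hdegree_def by simp
      then have "peel_step ?d (V', E') (V' - {x}, {e\<in>E'. x \<notin> e})" using x by (rule peel_step.intros[rotated])
      then show False using assms(13) by blast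
    qed
  qed
  have nV': "card V' \<le> n" using card_mono[OF finV V'V] assms(8) by simp
  have cnt: "int (card E') \<ge> int H.dd * (int (card V') - int m)"
  proof -
    have "f n \<ge> int ?d * (int n - int m)" unfolding f_def by simp
    then have "int (card E) \<ge> int ?d * (int n - int m)" using assms(11) by linarith
    moreover have "int (card E) \<le> int (card E') + int ?d * (int n - int (card V'))"
    proof -
      have "int (card E) \<le> int (card E' + ?d * (n - card V'))" using cE assms(8) by (simp only: of_nat_le_iff)
      also have "\<dots> = int (card E') + int ?d * (int n - int (card V'))" using nV' by (simp add: of_nat_diff)
      finally show ?thesis .
    qed
    ultimately have "int (card E') \<ge> int ?d * (int n - int m) - int ?d * (int n - int (card V'))" by linarith
    also have "int ?d * (int n - int m) - int ?d * (int n - int (card V')) = int ?d * (int (card V') - int m)"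
      by (simp add: algebra_simps)
    finally show ?thesis unfolding dd .
  qed
  have conn: "\<forall>a\<in>V'. \<forall>b\<in>V'. (\<lambda>x y. \<exists>e\<in>E. x \<in> e \<and> y \<in> e)\<^sup>*\<^sup>* a b"
  proof (intro ballI)
    fix a b assume ab: "a \<in> V'" "b \<in> V'"
    show "(\<lambda>x y. \<exists>e\<in>E. x \<in> e \<and> y \<in> e)\<^sup>*\<^sup>* a b"
    proof (cases "a = b")
      case True then show ?thesis by simp
    next
      case False
      then obtain es where "es \<noteq> []" "set es \<subseteq> E" "a \<in> hd es" "b \<in> last es"
         "\<forall>i. Suc i < length es \<longrightarrow> es ! i \<inter> es ! Suc i \<noteq> {}"
        using assms(9) ab V'V unfolding hconnected_def by blast
      then show ?thesis by (rule rtranclp_of_chain)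
    qed
  qed
  show ?thesis
  proof (rule ccontr)
    assume nc: "\<not> hconnected V' E'"
    then obtain u0 w0 where uw: "u0 \<in> V'" "w0 \<in> V'" "\<not> H.reach u0 w0"
      using H.hconn_of_reach by blast
    have allbad: "\<forall>x\<in>V'. \<exists>y. H.reach x y \<and> H.bad y"
    proof (rule ccontr)
      assume "\<not> (\<forall>x\<in>V'. \<exists>y. H.reach x y \<and> H.bad y)"
      then obtain x where x: "x \<in> V'" "\<forall>y. H.reach x y \<longrightarrow> \<not> H.bad y" by blast
      have "\<exists>z\<in>V'. \<not> H.reach x z"
      proof (rule ccontr)
        assume "\<not> (\<exists>z\<in>V'. \<not> H.reach x z)"
        then have "H.reach x u0" "H.reach x w0" using uw by auto
        then have "H.reach u0 w0" using H.reach_sym by (meson rtranclp_trans)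
        then show False using uw by simp
      qed
      then obtain z where z: "z \<in> V'" "\<not> H.reach x z" by blast
      have "has_berge_path E k"
        by (rule H.good_comp_contra[OF finV' E'V' degV E'E conn x z kb])
      then show False using assms(10) by simp
    qed
    show False by (rule H.all_bad_contra[OF finV' E'V' degV allbad uw cnt])
  qed
qed

end
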